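(* Let $T$ be a tree with at least two vertices. Then $\dim(T)=\mathrm{adim}(T)$ if and only if one of the following holds: - $T\in\{P_2,P_3\}$; or - for some integer $x\ge3$, $T$ is obtained from the star $K_{1,x}$ by subdividing at most $x-1$ of its edges, each exactly once.
   Context: $d(x,y)$ denotes graph distance. A set $S\subseteq V(G)$ is a resolving set if for all distinct $x,y$ there is $z\in S$ with $d(x,z)\ne d(y,z)$. $\dim(G)$ is the minimum size of a resolving set. Let $d_1(x,y)=\min\{d(x,y),2\}$. A set $A\subseteq V(G)$ is an adjacency resolving set if for all distinct $x,y\in V(G)$ there is $z\in A$ with $d_1(x,z)\ne d_1(y,z)$. $\mathrm{adim}(G)$ is the minimum size of an adjacency resolving set. *)

theory Defs
  imports Main
begin

definition simple_graph :: "'a set \<Rightarrow> ('a \<Rightarrow> 'a \<Rightarrow> bool) \<Rightarrow> bool" where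
  "simple_graph V E \<longleftrightarrow> finite V \<and> (\<forall>x y. E x y \<longrightarrow> x \<in> V \<and> y \<in> V)
     \<and> (\<forall>x y. E x y \<longrightarrow> E y x) \<and> (\<forall>x. \<not> E x x)"

definition walk :: "('a \<Rightarrow> 'a \<Rightarrow> bool) \<Rightarrow> 'a list \<Rightarrow> bool" where
  "walk E xs \<longleftrightarrow> xs \<noteq> [] \<and> (\<forall>i < length xs - 1. E (xs ! i) (xs ! (i + 1)))"

definition connected_graph :: "'a set \<Rightarrow> ('a \<Rightarrow> 'a \<Rightarrow> bool) \<Rightarrow> bool" where
  "connected_graph V E \<longleftrightarrow>
     (\<forall>x\<in>V. \<forall>y\<in>V. \<exists>xs. walk E xs \<and> hd xs = x \<and> last xs = y)"

definition has_cycle :: "('a \<Rightarrow> 'a \<Rightarrow> bool) \<Rightarrow> bool" where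
  "has_cycle E \<longleftrightarrow> (\<exists>xs. length xs \<ge> 3 \<and> distinct xs \<and> walk E xs \<and> E (last xs) (hd xs))"

definition tree :: "'a set \<Rightarrow> ('a \<Rightarrow> 'a \<Rightarrow> bool) \<Rightarrow> bool" where
  "tree V E \<longleftrightarrow> simple_graph V E \<and> V \<noteq> {} \<and> connected_graph V E \<and> \<not> has_cycle E"

definition gdist :: "('a \<Rightarrow> 'a \<Rightarrow> bool) \<Rightarrow> 'a \<Rightarrow> 'a \<Rightarrow> nat" where
  "gdist E x y = (LEAST n. \<exists>xs. walk E xs \<and> hd xs = x \<and> last xs = y \<and> length xs = n + 1)"

definition resolving_set :: "'a set \<Rightarrow> ('a \<Rightarrow> 'a \<Rightarrow> bool) \<Rightarrow> 'a set \<Rightarrow> bool" where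
  "resolving_set V E S \<longleftrightarrow> S \<subseteq> V \<and>
     (\<forall>x\<in>V. \<forall>y\<in>V. x \<noteq> y \<longrightarrow> (\<exists>z\<in>S. gdist E x z \<noteq> gdist E y z))"

definition metric_dim :: "'a set \<Rightarrow> ('a \<Rightarrow> 'a \<Rightarrow> bool) \<Rightarrow> nat" where
  "metric_dim V E = Min {card S | S. resolving_set V E S}"

definition adist :: "('a \<Rightarrow> 'a \<Rightarrow> bool) \<Rightarrow> 'a \<Rightarrow> 'a \<Rightarrow> nat" where
  "adist E x y = min (gdist E x y) 2"

definition adj_resolving_set :: "'a set \<Rightarrow> ('a \<Rightarrow> 'a \<Rightarrow> bool) \<Rightarrow> 'a set \<Rightarrow> bool" where
  "adj_resolving_set V E A \<longleftrightarrow> A \<subseteq> V \<and>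
     (\<forall>x\<in>V. \<forall>y\<in>V. x \<noteq> y \<longrightarrow> (\<exists>z\<in>A. adist E x z \<noteq> adist E y z))"

definition adj_dim :: "'a set \<Rightarrow> ('a \<Rightarrow> 'a \<Rightarrow> bool) \<Rightarrow> nat" where
  "adj_dim V E = Min {card A | A. adj_resolving_set V E A}"

definition graph_iso :: "'a set \<Rightarrow> ('a \<Rightarrow> 'a \<Rightarrow> bool) \<Rightarrow> 'b set \<Rightarrow> ('b \<Rightarrow> 'b \<Rightarrow> bool) \<Rightarrow> bool" where
  "graph_iso V E W F \<longleftrightarrow> (\<exists>f. bij_betw f V W \<and> (\<forall>x\<in>V. \<forall>y\<in>V. E x y \<longleftrightarrow> F (f x) (f y)))"

definition path_V :: "nat \<Rightarrow> nat set" where "path_V n = {0..<n}"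
definition path_E :: "nat \<Rightarrow> nat \<Rightarrow> nat \<Rightarrow> bool" where
  "path_E n u v \<longleftrightarrow> u < n \<and> v < n \<and> (u + 1 = v \<or> v + 1 = u)"

text \<open>Star K_{1,x} (centre 0, leaves 1..x) with the edges to leaves 1..k subdivided once:
  subdivision vertex x+i sits between centre 0 and leaf i (1 \<le> i \<le> k).\<close>
definition spider_V :: "nat \<Rightarrow> nat \<Rightarrow> nat set" where "spider_V x k = {0..x+k}"
definition spider_E0 :: "nat \<Rightarrow> nat \<Rightarrow> nat \<Rightarrow> nat \<Rightarrow> bool" where
  "spider_E0 x k u v \<longleftrightarrow> (u = 0 \<and> k < v \<and> v \<le> x) \<or> (u = 0 \<and> x < v \<and> v \<le> x + k)
     \<or> (1 \<le> u \<and> u \<le> k \<and> v = x + u)"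
definition spider_E :: "nat \<Rightarrow> nat \<Rightarrow> nat \<Rightarrow> nat \<Rightarrow> bool" where
  "spider_E x k u v \<longleftrightarrow> spider_E0 x k u v \<or> spider_E0 x k v u"

end

theory Submission
  imports Defs
begin

locale tr =
  fixes V :: "'a set" and E :: "'a \<Rightarrow> 'a \<Rightarrow> bool"
  assumes tr: "tree V E"
begin

abbreviation d where "d \<equiv> gdist E"

lemma finV: "finite V" using tr unfolding tree_def simple_graph_def by auto
lemma EV: "E x y \<Longrightarrow> x \<in> V \<and> y \<in> V" using tr unfolding tree_def simple_graph_def by auto
lemma Esym: "E x y \<Longrightarrow> E y x" using tr unfolding tree_def simple_graph_def by auto
lemma Eirr: "\<not> E x x" using tr unfolding tree_def simple_graph_def by auto
lemma Ene: "E x y \<Longrightarrow> x \<noteq> y" using Eirr by auto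
lemma Vne: "V \<noteq> {}" using tr unfolding tree_def by auto
lemma noc: "\<not> has_cycle E" using tr unfolding tree_def by auto

lemma walk_ex: assumes "x \<in> V" "y \<in> V"
  shows "\<exists>xs. walk E xs \<and> hd xs = x \<and> last xs = y \<and> length xs = d x y + 1"
proof -
  from tr assms obtain xs where "walk E xs" "hd xs = x" "last xs = y"
    unfolding tree_def connected_graph_def by blast
  moreover have "length xs = (length xs - 1) + 1" using \<open>walk E xs\<close> unfolding walk_def by auto
  ultimately have "\<exists>n xs. walk E xs \<and> hd xs = x \<and> last xs = y \<and> length xs = n + 1" by blast
  then show ?thesis unfolding gdist_def by (rule LeastI_ex)
qed

lemma d_le: assumes "walk E xs" "hd xs = x" "last xs = y"
  shows "d x y \<le> length xs - 1"
proof -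
  have "length xs = (length xs - 1) + 1" using assms unfolding walk_def by auto
  then show ?thesis unfolding gdist_def using assms by (intro Least_le) blast
qed

lemma d_refl[simp]: "d x x = 0"
proof -
  have "walk E [x]" unfolding walk_def by auto
  from d_le[OF this] show ?thesis by auto
qed

lemma d0: assumes "x \<in> V" "y \<in> V" "d x y = 0" shows "x = y"
proof -
  obtain xs where "walk E xs" "hd xs = x" "last xs = y" "length xs = 1"
    using walk_ex[OF assms(1,2)] assms(3) by auto
  then show ?thesis by (cases xs) auto
qed

lemma d_step: assumes "E x p" "p \<in> V" "y \<in> V" shows "d x y \<le> d p y + 1"
proof -
  obtain xs where xs: "walk E xs" "hd xs = p" "last xs = y" "length xs = d p y + 1"
    using walk_ex[OF assms(2,3)] by auto
  have "walk E (x # xs)" unfolding walk_def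
  proof (intro conjI allI impI)
    fix i assume i: "i < length (x # xs) - 1"
    show "E ((x # xs) ! i) ((x # xs) ! (i + 1))"
    proof (cases i)
      case 0 then show ?thesis using xs assms by (cases xs) auto
    next
      case (Suc j) then show ?thesis using xs i unfolding walk_def by auto
    qed
  qed simp
  from d_le[OF this] xs show ?thesis by (cases xs) auto
qed

lemma d_closer: assumes "x \<in> V" "y \<in> V" "x \<noteq> y"
  shows "\<exists>p. E x p \<and> d p y + 1 = d x y"
proof -
  obtain xs where xs: "walk E xs" "hd xs = x" "last xs = y" "length xs = d x y + 1"
    using walk_ex[OF assms(1,2)] by auto
  have "d x y \<noteq> 0" using d0 assms by auto
  then have l2: "length xs \<ge> 2" using xs by auto
  then obtain a b ys where xsd: "xs = a # b # ys" by (cases xs; cases "tl xs") auto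
  have Exb: "E x b" using xs xsd unfolding walk_def by force
  have "walk E (b # ys)" using xs(1) unfolding xsd walk_def by auto
  from d_le[OF this] have "d b y \<le> length ys" using xs xsd by auto
  moreover have "d x y \<le> d b y + 1" using d_step[OF Exb] EV[OF Exb] assms by auto
  ultimately have "d b y + 1 = d x y" using xs xsd by auto
  with Exb show ?thesis by blast
qed

lemma d_tri: assumes "x \<in> V" "y \<in> V" "z \<in> V" shows "d x z \<le> d x y + d y z"
  using assms
proof (induction "d x y" arbitrary: x)
  case 0 then show ?case using d0 by auto
next
  case (Suc n)
  then have "x \<noteq> y" by auto
  then obtain p where p: "E x p" "d p y + 1 = d x y" using d_closer Suc by blast
  have pV: "p \<in> V" using EV p by auto
  have "d p z \<le> d p y + d y z" using Suc(1)[of p] p pV Suc by auto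
  moreover have "d x z \<le> d p z + 1" using d_step p pV Suc by auto
  ultimately show ?case using p by auto
qed

lemma d_E: assumes "E x y" shows "d x y = 1"
proof -
  have "d x y \<le> d y y + 1" by (rule d_step[OF assms]) (use EV[OF assms] in auto)
  moreover have "d x y \<noteq> 0" using d0 EV[OF assms] Ene[OF assms] by auto
  ultimately show ?thesis by auto
qed

lemma d_1: assumes "x \<in> V" "y \<in> V" "d x y = 1" shows "E x y"
proof -
  obtain p where "E x p" "d p y + 1 = d x y" using d_closer assms by fastforce
  then show ?thesis using d0 EV assms by auto
qed

lemma d_sym_le: assumes "x \<in> V" "y \<in> V" shows "d x y \<le> d y x"
  using assms
proof (induction "d y x" arbitrary: y)
  case 0 then show ?case using d0 by auto
next
  case (Suc n)
  then have "y \<noteq> x" by auto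
  then obtain q where q: "E y q" "d q x + 1 = d y x" using d_closer Suc by blast
  have qV: "q \<in> V" using EV q by auto
  have "d x q \<le> d q x" using Suc(1)[of q] q qV Suc by auto
  moreover have "d x y \<le> d x q + d q y" using d_tri Suc qV by auto
  moreover have "d q y = 1" using d_E Esym q by auto
  ultimately show ?case using q by auto
qed

lemma d_sym: "x \<in> V \<Longrightarrow> y \<in> V \<Longrightarrow> d x y = d y x"
  using d_sym_le by (simp add: antisym)

end

context tr begin

lemma geo_aux: assumes "x \<in> V" "y \<in> V" "d x y = n"
  shows "\<exists>P. P 0 = x \<and> P n = y \<and> (\<forall>i<n. E (P i) (P (Suc i))) \<and> (\<forall>i\<le>n. P i \<in> V \<and> d (P i) y = n - i)"
  using assms
proof (induction n arbitrary: x)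
  case 0 then show ?case using d0 by (intro exI[of _ "\<lambda>_. x"]) auto
next
  case (Suc n)
  then have "x \<noteq> y" by auto
  then obtain p where p: "E x p" "d p y + 1 = d x y" using d_closer Suc by blast
  then obtain Q where Q: "Q 0 = p" "Q n = y" "\<forall>i<n. E (Q i) (Q (Suc i))" "\<forall>i\<le>n. Q i \<in> V \<and> d (Q i) y = n - i"
    using Suc.IH[of p] EV[OF p(1)] Suc.prems by auto
  show ?case
  proof (intro exI[of _ "case_nat x Q"] conjI allI impI)
    fix i assume "i < Suc n" then show "E (case_nat x Q i) (case_nat x Q (Suc i))"
      using Q p by (cases i) auto
  next
    fix i assume "i \<le> Suc n" then show "case_nat x Q i \<in> V"
      using Q Suc by (cases i) auto
  next
    fix i assume "i \<le> Suc n" then show "d (case_nat x Q i) y = Suc n - i"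
      using Q Suc by (cases i) auto
  qed (use Q in auto)
qed

lemma path_bound: assumes "\<forall>i<n. E (P i) (P (Suc i))" "\<forall>i\<le>n. P i \<in> V" "i \<le> n"
  shows "d (P 0) (P i) \<le> i"
  using assms(3)
proof (induction i)
  case 0 then show ?case by simp
next
  case (Suc i)
  have V3: "P 0 \<in> V" "P i \<in> V" "P (Suc i) \<in> V" using assms(2) Suc.prems by auto
  have "d (P 0) (P (Suc i)) \<le> d (P 0) (P i) + d (P i) (P (Suc i))"
    using d_tri[OF V3] .
  moreover have "d (P i) (P (Suc i)) = 1" using d_E assms(1) Suc.prems by auto
  ultimately show ?case using Suc by auto
qed

lemma geo: assumes "x \<in> V" "y \<in> V"
  shows "\<exists>P. P 0 = x \<and> P (d x y) = y \<and> (\<forall>i<d x y. E (P i) (P (Suc i))) \<and>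
     (\<forall>i\<le>d x y. P i \<in> V \<and> d x (P i) = i \<and> d (P i) y = d x y - i)"
proof -
  obtain P where P: "P 0 = x" "P (d x y) = y" "\<forall>i<d x y. E (P i) (P (Suc i))"
    "\<forall>i\<le>d x y. P i \<in> V \<and> d (P i) y = d x y - i"
    using geo_aux[OF assms refl] by blast
  have "\<forall>i\<le>d x y. d x (P i) = i"
  proof (intro allI impI)
    fix i assume i: "i \<le> d x y"
    have "d x (P i) \<le> i" using path_bound[of "d x y" P i] P i by auto
    moreover have "d x y \<le> d x (P i) + d (P i) y" using d_tri[OF assms(1) _ assms(2), of "P i"] P i by auto
    ultimately show "d x (P i) = i" using P i by auto
  qed
  with P show ?thesis by blast
qed

lemma cyc_fn: assumes "L \<ge> 3" "inj_on g {0..<L}" "\<forall>i. Suc i < L \<longrightarrow> E (g i) (g (Suc i))"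
  "E (g (L - 1)) (g 0)" shows "has_cycle E"
proof -
  let ?xs = "map g [0..<L]"
  have "distinct ?xs" using assms(2) by (simp add: distinct_map)
  moreover have "walk E ?xs" unfolding walk_def using assms(1,3) by auto
  moreover have "hd ?xs = g 0" using assms(1) by (simp add: hd_map)
  moreover have "last ?xs = g (L - 1)" using assms(1) by (simp add: last_map)
  ultimately show ?thesis unfolding has_cycle_def using assms by (intro exI[of _ ?xs]) auto
qed

lemma T1: assumes "E u m" "z \<in> V" shows "d z u \<noteq> d z m"
proof
  assume eq: "d z u = d z m"
  have uV: "u \<in> V" and mV: "m \<in> V" using EV assms by auto
  define k where "k = d z u"
  obtain P where P: "P 0 = z" "P k = u" "\<forall>i<k. E (P i) (P (Suc i))"
     "\<forall>i\<le>k. P i \<in> V \<and> d z (P i) = i" using geo[OF assms(2) uV] unfolding k_def by blast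
  obtain Q where Q: "Q 0 = z" "Q k = m" "\<forall>i<k. E (Q i) (Q (Suc i))"
     "\<forall>i\<le>k. Q i \<in> V \<and> d z (Q i) = i" using geo[OF assms(2) mV] eq unfolding k_def by metis
  define J where "J = {i. i \<le> k \<and> P i = Q i}"
  have finJ: "finite J" unfolding J_def by auto
  have "0 \<in> J" unfolding J_def using P Q by auto
  define j where "j = Max J"
  have jJ: "j \<in> J" unfolding j_def using finJ \<open>0 \<in> J\<close> Max_in by blast
  have jmax: "\<And>t. t \<in> J \<Longrightarrow> t \<le> j" unfolding j_def using finJ by auto
  have PQ: "\<And>a b. a \<le> k \<Longrightarrow> b \<le> k \<Longrightarrow> P a = Q b \<Longrightarrow> a = b" using P Q by metis
  have PP: "\<And>a b. a \<le> k \<Longrightarrow> b \<le> k \<Longrightarrow> P a = P b \<Longrightarrow> a = b" using P by metis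
  have QQ: "\<And>a b. a \<le> k \<Longrightarrow> b \<le> k \<Longrightarrow> Q a = Q b \<Longrightarrow> a = b" using Q by metis
  have jk: "j < k" using jJ P Q Ene[OF assms(1)] unfolding J_def by (cases "j = k") auto
  define g where "g i = (if i \<le> k - j then P (j + i) else Q (2*k - j + 1 - i))" for i
  define L where "L = 2*(k-j) + 1"
  show False
  proof (rule notE[OF noc], rule cyc_fn[of L g])
    show "3 \<le> L" using jk unfolding L_def by auto
    show "inj_on g {0..<L}"
    proof (rule inj_onI)
      fix a b assume a: "a \<in> {0..<L}" and b: "b \<in> {0..<L}" and ab: "g a = g b"
      show "a = b"
      proof (cases "a \<le> k - j")
        case True note a1 = True
        show ?thesis
        proof (cases "b \<le> k - j")
          case True then show ?thesis using a1 ab PP[of "j+a" "j+b"] jk unfolding g_def by auto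
        next
          case False
          then have "P (j + a) = Q (2*k - j + 1 - b)" using ab a1 unfolding g_def by auto
          then have "j + a = 2*k - j + 1 - b" using PQ a1 False b jk unfolding L_def by auto
          moreover have "j + a \<in> J" using calculation \<open>P (j + a) = Q (2*k - j + 1 - b)\<close> a1 jk
            unfolding J_def by auto
          ultimately show ?thesis using jmax False b unfolding L_def by fastforce
        qed
      next
        case False note a1 = False
        show ?thesis
        proof (cases "b \<le> k - j")
          case True
          then have "P (j + b) = Q (2*k - j + 1 - a)" using ab a1 unfolding g_def by auto
          then have "j + b = 2*k - j + 1 - a" using PQ True a1 a jk unfolding L_def by auto
          moreover have "j + b \<in> J" using calculation \<open>P (j + b) = Q (2*k - j + 1 - a)\<close> True jk
            unfolding J_def by auto
          ultimately show ?thesis using jmax a1 a unfolding L_def by fastforce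
        next
          case False
          then have "Q (2*k - j + 1 - a) = Q (2*k - j + 1 - b)" using ab a1 unfolding g_def by auto
          then have "2*k - j + 1 - a = 2*k - j + 1 - b" using QQ False a1 a b jk unfolding L_def by auto
          then show ?thesis using a b unfolding L_def by auto
        qed
      qed
    qed
    show "\<forall>i. Suc i < L \<longrightarrow> E (g i) (g (Suc i))"
    proof (intro allI impI)
      fix i assume i: "Suc i < L"
      consider "Suc i \<le> k - j" | "i = k - j" | "i > k - j" by linarith
      then show "E (g i) (g (Suc i))"
      proof cases
        case 1 then show ?thesis using P(3) jk unfolding g_def by auto
      next
        case 2
        then have "g i = u" "g (Suc i) = m" using P Q jk unfolding g_def by (auto simp: numeral_2_eq_2)
        then show ?thesis using assms by auto
      next
        case 3
        define t where "t = 2*k - j - i"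
        have t: "t < k" "g i = Q (Suc t)" "g (Suc i) = Q t" using 3 i jk unfolding g_def t_def L_def
          by (auto simp: Suc_diff_le)
        then show ?thesis using Q(3) Esym by auto
      qed
    qed
    have e1: "2*k - j + 1 - (L - 1) = Suc j" "\<not> (L - 1 \<le> k - j)" using jk unfolding L_def by auto
    have "g (L - 1) = Q (Suc j)" unfolding g_def using e1 by simp
    moreover have "g 0 = Q j" using jk jJ unfolding g_def J_def by auto
    ultimately show "E (g (L - 1)) (g 0)" using Q(3) jk Esym by auto
  qed
qed

end

context tr begin

lemma D1: assumes "E u m" "z \<in> V" shows "d z u = d z m + 1 \<or> d z m = d z u + 1"
proof -
  have uV: "u \<in> V" and mV: "m \<in> V" using EV assms by auto
  have "d z u \<le> d z m + d m u" using d_tri[OF assms(2) mV uV] .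
  moreover have "d z m \<le> d z u + d u m" using d_tri[OF assms(2) uV mV] .
  moreover have "d m u = 1" "d u m = 1" using d_E assms Esym by auto
  ultimately show ?thesis using T1[OF assms] by auto
qed

lemma T2: assumes "E m u" "E m w" "u \<noteq> w" "z \<in> V" "d z u < d z m" "d z w < d z m"
  shows False
proof -
  have uV: "u \<in> V" and mV: "m \<in> V" and wV: "w \<in> V" using EV assms by auto
  define k where "k = d z u"
  have dm: "d z m = k + 1" using D1[OF Esym[OF assms(1)] assms(4)] assms(5) unfolding k_def by auto
  have dw: "d z w = k" using D1[OF Esym[OF assms(2)] assms(4)] assms(6) dm by auto
  obtain P where P: "P 0 = z" "P k = u" "\<forall>i<k. E (P i) (P (Suc i))"
     "\<forall>i\<le>k. P i \<in> V \<and> d z (P i) = i" using geo[OF assms(4) uV] unfolding k_def by blast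
  obtain Q where Q: "Q 0 = z" "Q k = w" "\<forall>i<k. E (Q i) (Q (Suc i))"
     "\<forall>i\<le>k. Q i \<in> V \<and> d z (Q i) = i" using geo[OF assms(4) wV] dw by metis
  define J where "J = {i. i \<le> k \<and> P i = Q i}"
  have finJ: "finite J" unfolding J_def by auto
  have "0 \<in> J" unfolding J_def using P Q by auto
  define j where "j = Max J"
  have jJ: "j \<in> J" unfolding j_def using finJ \<open>0 \<in> J\<close> Max_in by blast
  have jmax: "\<And>t. t \<in> J \<Longrightarrow> t \<le> j" unfolding j_def using finJ by auto
  have PQ: "\<And>a b. a \<le> k \<Longrightarrow> b \<le> k \<Longrightarrow> P a = Q b \<Longrightarrow> a = b" using P Q by metis
  have PP: "\<And>a b. a \<le> k \<Longrightarrow> b \<le> k \<Longrightarrow> P a = P b \<Longrightarrow> a = b" using P by metis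
  have QQ: "\<And>a b. a \<le> k \<Longrightarrow> b \<le> k \<Longrightarrow> Q a = Q b \<Longrightarrow> a = b" using Q by metis
  have Pm: "\<And>a. a \<le> k \<Longrightarrow> P a \<noteq> m" using P dm by force
  have Qm: "\<And>a. a \<le> k \<Longrightarrow> Q a \<noteq> m" using Q dm by force
  have jk: "j < k" using jJ P Q assms(3) unfolding J_def by (cases "j = k") auto
  define g where "g i = (if i \<le> k - j then P (j + i) else if i = k - j + 1 then m else Q (2*k - j + 2 - i))" for i
  define L where "L = 2*(k-j) + 2"
  show False
  proof (rule notE[OF noc], rule cyc_fn[of L g])
    show "3 \<le> L" using jk unfolding L_def by auto
    show "inj_on g {0..<L}"
    proof (rule inj_onI)
      fix a b assume a: "a \<in> {0..<L}" and b: "b \<in> {0..<L}" and ab: "g a = g b"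
      consider "a \<le> k - j" | "a = k - j + 1" | "a > k - j + 1" by linarith
      note ca = this
      consider "b \<le> k - j" | "b = k - j + 1" | "b > k - j + 1" by linarith
      note cb = this
      show "a = b"
      proof (cases rule: ca)
        case 1 note a1 = 1
        show ?thesis
        proof (cases rule: cb)
          case 1 then show ?thesis using a1 ab PP[of "j+a" "j+b"] jk unfolding g_def by auto
        next
          case 2 have "j + a \<le> k" using a1 jk by linarith
          then show ?thesis using 2 a1 ab Pm[of "j+a"] jk unfolding g_def by auto
        next
          case 3
          then have "P (j + a) = Q (2*k - j + 2 - b)" using ab a1 unfolding g_def by auto
          then have "j + a = 2*k - j + 2 - b" using PQ a1 3 b jk unfolding L_def by auto
          moreover have "j + a \<in> J" using calculation \<open>P (j + a) = Q (2*k - j + 2 - b)\<close> a1 jk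
            unfolding J_def by auto
          ultimately show ?thesis using jmax 3 b unfolding L_def by fastforce
        qed
      next
        case 2 note a1 = 2
        show ?thesis
        proof (cases rule: cb)
          case 1 then have "j + b \<le> k" using jk by linarith
          then show ?thesis using 1 a1 ab Pm[of "j+b"] jk unfolding g_def by auto
        next
          case 2 then show ?thesis using a1 by auto
        next
          case 3 then have "2*k - j + 2 - b \<le> k" using jk by linarith
          then show ?thesis using 3 a1 ab Qm[of "2*k - j + 2 - b"] jk unfolding g_def by auto
        qed
      next
        case 3 note a1 = 3
        show ?thesis
        proof (cases rule: cb)
          case 1
          then have "P (j + b) = Q (2*k - j + 2 - a)" using ab a1 unfolding g_def by auto
          then have "j + b = 2*k - j + 2 - a" using PQ 1 a1 a jk unfolding L_def by auto
          moreover have "j + b \<in> J" using calculation \<open>P (j + b) = Q (2*k - j + 2 - a)\<close> 1 jk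
            unfolding J_def by auto
          ultimately show ?thesis using jmax a1 a unfolding L_def by fastforce
        next
          case 2 have "2*k - j + 2 - a \<le> k" using a1 jk by linarith
          then show ?thesis using 2 a1 ab Qm[of "2*k - j + 2 - a"] jk unfolding g_def by auto
        next
          case 3
          then have "Q (2*k - j + 2 - a) = Q (2*k - j + 2 - b)" using ab a1 unfolding g_def by auto
          then have "2*k - j + 2 - a = 2*k - j + 2 - b" using QQ 3 a1 a b jk unfolding L_def by auto
          then show ?thesis using a b unfolding L_def by auto
        qed
      qed
    qed
    show "\<forall>i. Suc i < L \<longrightarrow> E (g i) (g (Suc i))"
    proof (intro allI impI)
      fix i assume i: "Suc i < L"
      consider "Suc i \<le> k - j" | "i = k - j" | "i = k - j + 1" | "i > k - j + 1" by linarith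
      then show "E (g i) (g (Suc i))"
      proof cases
        case 1 then show ?thesis using P(3) jk unfolding g_def by auto
      next
        case 2
        then have "g i = u" "g (Suc i) = m" using P jk unfolding g_def by auto
        then show ?thesis using assms Esym by auto
      next
        case 3
        have e: "2*k - j + 2 - Suc i = k" using 3 jk by auto
        have "g i = m" using 3 unfolding g_def by auto
        moreover have "g (Suc i) = w" unfolding g_def using 3 e Q by auto
        ultimately show ?thesis using assms by auto
      next
        case 4
        define t where "t = 2*k - j + 1 - i"
        have t: "t < k" "g i = Q (Suc t)" "g (Suc i) = Q t" using 4 i jk unfolding g_def t_def L_def
          by (auto simp: Suc_diff_le)
        then show ?thesis using Q(3) Esym by auto
      qed
    qed
    have e1: "2*k - j + 2 - (L - 1) = Suc j" "\<not> (L - 1 \<le> k - j)" "L - 1 \<noteq> k - j + 1"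
      using jk unfolding L_def by auto
    have "g (L - 1) = Q (Suc j)" unfolding g_def using e1 by simp
    moreover have "g 0 = Q j" using jk jJ unfolding g_def J_def by auto
    ultimately show "E (g (L - 1)) (g 0)" using Q(3) jk Esym by auto
  qed
qed

end

context tr begin

definition Br where "Br m u = {z \<in> V. d z u < d z m}"

lemma BrV: "z \<in> Br m u \<Longrightarrow> z \<in> V" unfolding Br_def by auto

lemma D2: assumes "z \<in> V" "m \<in> V" "z \<noteq> m" shows "\<exists>u. E m u \<and> z \<in> Br m u"
proof -
  obtain p where p: "E m p" "d p z + 1 = d m z" using d_closer assms by metis
  have "d z p = d p z" "d z m = d m z" using d_sym EV[OF p(1)] assms by auto
  then show ?thesis using p assms unfolding Br_def by auto
qed

lemma Br_disj: assumes "E m u" "E m w" "z \<in> Br m u" "z \<in> Br m w" shows "u = w"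
  using T2[OF assms(1,2) _ BrV[OF assms(3)]] assms(3,4) unfolding Br_def by auto

lemma Br_m: "m \<notin> Br m u" unfolding Br_def by auto

lemma Br_u: assumes "E m u" shows "u \<in> Br m u"
proof -
  have "u \<in> V" "d u m = 1" using EV[OF assms] d_E[OF Esym[OF assms]] by auto
  then show ?thesis unfolding Br_def by simp
qed

lemma Br_out: assumes "E m u" "z \<in> V" "z \<notin> Br m u" shows "d z u = d z m + 1"
  using D1[OF Esym[OF assms(1)] assms(2)] assms(2,3) unfolding Br_def by auto

lemma Br_in: assumes "E m u" "z \<in> Br m u" shows "d z m = d z u + 1"
  using D1[OF Esym[OF assms(1)] BrV[OF assms(2)]] assms(2) unfolding Br_def by auto

lemma D5: assumes "E a b" "a \<noteq> m" "b \<noteq> m" "E m u" "a \<in> Br m u" shows "b \<in> Br m u"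
proof -
  have aV: "a \<in> V" and bV: "b \<in> V" and mV: "m \<in> V" and uV: "u \<in> V" using EV assms by auto
  have da: "d a m = d a u + 1" using Br_in assms by auto
  have "d b m = d a m + 1 \<or> d a m = d b m + 1"
  proof -
    have "d a m = d m a" "d b m = d m b" using d_sym aV bV mV by auto
    then show ?thesis using D1[OF assms(1) mV] by auto
  qed
  then show ?thesis
  proof
    assume h: "d b m = d a m + 1"
    have "d b u \<le> d b a + d a u" using d_tri[OF bV aV uV] .
    moreover have "d b a = 1" using d_E[OF Esym[OF assms(1)]] .
    ultimately show ?thesis using h da bV unfolding Br_def by auto
  next
    assume h: "d a m = d b m + 1"
    obtain u' where u': "E m u'" "b \<in> Br m u'" using D2[OF bV mV assms(3)] by blast
    have dbm: "d b m = d b u' + 1" using Br_in u' by auto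
    have "d a u' \<le> d a b + d b u'" using d_tri[OF aV bV] EV[OF u'(1)] by auto
    moreover have "d a b = 1" using d_E assms by auto
    ultimately have "a \<in> Br m u'" using h dbm aV unfolding Br_def by auto
    then have "u' = u" using Br_disj u'(1) assms(4,5) by auto
    then show ?thesis using u' by auto
  qed
qed

lemma D4: assumes "E m u" "z \<in> Br m u" "s \<in> V" "s \<notin> Br m u"
  shows "d z s = d z m + d m s"
proof (cases "s = m")
  case True then show ?thesis by simp
next
  case False
  have zV: "z \<in> V" using BrV[OF assms(2)] .
  have mV: "m \<in> V" using EV[OF assms(1)] by simp
  obtain P where P: "P 0 = s" "P (d s z) = z" "\<forall>i<d s z. E (P i) (P (Suc i))"
     "\<forall>i\<le>d s z. P i \<in> V \<and> d s (P i) = i \<and> d (P i) z = d s z - i" using geo[OF assms(3) zV] by blast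
  have "\<exists>i\<le>d s z. P i = m"
  proof (rule ccontr)
    assume nm: "\<not> ?thesis"
    have "\<forall>i\<le>d s z. P i \<notin> Br m u"
    proof (intro allI impI)
      fix i assume "i \<le> d s z" then show "P i \<notin> Br m u"
      proof (induction i)
        case 0 then show ?case using P(1) assms(4) by simp
      next
        case (Suc i)
        show ?case
        proof
          assume h: "P (Suc i) \<in> Br m u"
          have e: "E (P (Suc i)) (P i)" by (rule Esym) (use P(3) Suc.prems in auto)
          have "P (Suc i) \<noteq> m" "P i \<noteq> m" using nm Suc.prems by auto
          then have "P i \<in> Br m u" using D5[OF e _ _ assms(1) h] by blast
          then show False using Suc by auto
        qed
      qed
    qed
    then have "P (d s z) \<notin> Br m u" by blast
    then show False using P(2) assms(2) by simp
  qed
  then obtain i where i: "i \<le> d s z" "P i = m" by blast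
  have "d s m = i" "d m z = d s z - i" using P(4)[rule_format, OF i(1)] i(2) by auto
  then have "d s z = d s m + d m z" using i by auto
  moreover have "d z s = d s z" "d z m = d m z" "d s m = d m s" using d_sym zV mV assms(3) by auto
  ultimately show ?thesis by auto
qed

lemma D7: assumes "E m' u'" "b \<in> Br m' u'" "E b x" "m' \<notin> Br b x" "z \<in> Br b x"
  shows "z \<in> Br m' u'"
proof -
  have zV: "z \<in> V" using BrV assms by auto
  have m'V: "m' \<in> V" and u'V: "u' \<in> V" using EV assms by auto
  have bV: "b \<in> V" using BrV assms by auto
  have "d z m' = d z b + d b m'" using D4[OF assms(3,5) m'V assms(4)] .
  moreover have "d z u' \<le> d z b + d b u'" using d_tri[OF zV bV u'V] .
  moreover have "d b u' < d b m'" using assms(2) unfolding Br_def by auto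
  ultimately show ?thesis using zV unfolding Br_def by auto
qed

definition crit where "crit S m u w \<longleftrightarrow> E m u \<and> E m w \<and> u \<noteq> w \<and> (\<forall>s\<in>S. s \<notin> Br m u \<and> s \<notin> Br m w)"

lemma crit_easy: assumes "crit S m u w" "S \<subseteq> V" shows "\<not> resolving_set V E S"
proof -
  have u: "E m u" and w: "E m w" and uw: "u \<noteq> w" using assms unfolding crit_def by auto
  have uV: "u \<in> V" and wV: "w \<in> V" using EV u w by auto
  have "\<forall>s\<in>S. d u s = d w s"
  proof
    fix s assume s: "s \<in> S"
    have sV: "s \<in> V" using s assms by auto
    have "d s u = d s m + 1" "d s w = d s m + 1" using Br_out u w sV s assms unfolding crit_def by auto
    then show "d u s = d w s" using d_sym uV wV sV by metis
  qed
  then show ?thesis unfolding resolving_set_def using uV wV uw by auto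
qed

lemma par_aux: assumes "even ((b::nat) + c + e)" "a = b + 1 \<or> b = a + 1" "f = e + 1" shows "even (a + c + f)"
proof -
  obtain q where q: "b + c + e = 2 * q" using assms(1) by (rule evenE)
  from assms(2) show ?thesis
  proof
    assume "a = b+1" then have "a + c + f = 2 * (q + 1)" using assms(3) q by simp
    then show ?thesis by simp
  next
    assume "b = a+1" then have "a + c + f = 2 * q" using assms(3) q by simp
    then show ?thesis by simp
  qed
qed

lemma parity: assumes "x \<in> V" "y \<in> V" "s \<in> V" shows "even (d x s + d y s + d x y)"
  using assms
proof (induction "d x y" arbitrary: x)
  case 0
  have "x = y" using d0[OF 0(2) 0(3)] 0(1) by simp
  then show ?case by simp
next
  case (Suc n)
  have "x \<noteq> y"
  proof
    assume "x = y" then show False using Suc.hyps(2) by simp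
  qed
  then obtain p where p: "E x p" "d p y + 1 = d x y" using d_closer Suc.prems by blast
  have pV: "p \<in> V" using EV p by auto
  have n: "n = d p y" using Suc.hyps(2) p(2) by simp
  have h1: "even (d p s + d y s + d p y)" using Suc.hyps(1)[OF n pV Suc.prems(2,3)] .
  have "d s x = d x s" "d s p = d p s" using d_sym[OF Suc.prems(3) Suc.prems(1)] d_sym[OF Suc.prems(3) pV] by auto
  then have h2: "d x s = d p s + 1 \<or> d p s = d x s + 1" using D1[OF p(1) Suc.prems(3)] by auto
  show ?case by (rule par_aux[OF h1 h2 p(2)[symmetric]])
qed

lemma crit_hard: assumes "S \<subseteq> V" "S \<noteq> {}" "x \<in> V" "y \<in> V" "x \<noteq> y" "\<forall>s\<in>S. d x s = d y s"
  shows "\<exists>m u w. crit S m u w"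
proof -
  obtain s0 where s0: "s0 \<in> S" using assms by auto
  have "even (d x s0 + d y s0 + d x y)" using parity[OF assms(3,4)] s0 assms(1) by auto
  moreover have "d x s0 = d y s0" using assms(6) s0 by auto
  ultimately have ev: "even (d x y)" by simp
  have "d x y \<noteq> 0" using d0 assms by auto
  then obtain k where k: "d x y = 2 * k" "k \<ge> 1" using ev by (auto elim!: evenE)
  obtain P where P: "P 0 = x" "P (d x y) = y" "\<forall>i<d x y. E (P i) (P (Suc i))"
     "\<forall>i\<le>d x y. P i \<in> V \<and> d x (P i) = i \<and> d (P i) y = d x y - i" using geo[OF assms(3,4)] by blast
  define m where "m = P k"
  define u where "u = P (k - 1)"
  define w where "w = P (k + 1)"
  have "E u m" using P(3)[rule_format, of "k - 1"] k unfolding m_def u_def by auto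
  then have mu: "E m u" by (rule Esym)
  have mw: "E m w" using P(3) k unfolding m_def w_def by auto
  have mV: "m \<in> V" and uV: "u \<in> V" and wV: "w \<in> V" using EV mu mw by auto
  have dxu: "d x u = k - 1" using P k unfolding u_def by auto
  have dxm: "d x m = k" using P k unfolding m_def by auto
  have dxw: "d x w = k + 1" using P k unfolding w_def by auto
  have dmy: "d m y = k" using P k unfolding m_def by auto
  have dwy: "d w y = k - 1" using P k unfolding w_def by auto
  have uw: "u \<noteq> w" using dxu dxw by auto
  have xu: "x \<in> Br m u" using dxu dxm k assms unfolding Br_def by auto
  have yw: "y \<in> Br m w" using dwy dmy k assms d_sym wV mV unfolding Br_def by auto
  have "\<forall>s\<in>S. s \<notin> Br m u \<and> s \<notin> Br m w"
  proof (intro ballI conjI notI)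
    fix s assume sS: "s \<in> S" and su: "s \<in> Br m u"
    have sV: "s \<in> V" using sS assms by auto
    have "s \<notin> Br m w" using Br_disj mu mw su uw by blast
    then have "d y s = d y m + d m s" using D4[OF mw yw sV] by auto
    moreover have "d x s \<le> d x u + d u s" using d_tri[OF assms(3) uV sV] .
    moreover have "d u s < d m s" using su d_sym uV mV sV unfolding Br_def by auto
    moreover have "d y m = k" using dmy d_sym mV assms by auto
    ultimately have "d x s < d y s" using dxu k by auto
    then show False using assms sS by auto
  next
    fix s assume sS: "s \<in> S" and sw: "s \<in> Br m w"
    have sV: "s \<in> V" using sS assms by auto
    have "s \<notin> Br m u" using Br_disj mu mw sw uw by blast
    then have "d x s = d x m + d m s" using D4[OF mu xu sV] by auto
    moreover have "d y s \<le> d y w + d w s" using d_tri[OF assms(4) wV sV] .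
    moreover have "d w s < d m s" using sw d_sym wV mV sV unfolding Br_def by auto
    moreover have "d y w = k - 1" using dwy d_sym wV assms by auto
    ultimately have "d y s < d x s" using dxm k by auto
    then show False using assms sS by auto
  qed
  then show ?thesis unfolding crit_def using mu mw uw by blast
qed

end

context tr begin

lemma adist_eq: assumes "x \<in> V" "y \<in> V"
  shows "adist E x y = (if x = y then 0 else if E x y then 1 else 2)"
proof -
  consider "x = y" | "x \<noteq> y" "E x y" | "x \<noteq> y" "\<not> E x y" by blast
  then show ?thesis
  proof cases
    case 1 then show ?thesis unfolding adist_def by simp
  next
    case 2 then show ?thesis unfolding adist_def using d_E[OF 2(2)] by simp
  next
    case 3
    have "d x y \<noteq> 0" using d0 assms 3 by blast
    moreover have "d x y \<noteq> 1" using d_1 assms 3 by blast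
    ultimately have "d x y \<ge> 2" by linarith
    then show ?thesis unfolding adist_def using 3 by simp
  qed
qed

lemma adist2: "adist E x y = 2 \<longleftrightarrow> d x y \<ge> 2" unfolding adist_def by auto

lemma adj_res_res: assumes "adj_resolving_set V E A" shows "resolving_set V E A"
  using assms unfolding adj_resolving_set_def resolving_set_def adist_def by metis

lemma null_uniq: assumes "adj_resolving_set V E A" "x \<in> V" "y \<in> V"
  "\<forall>s\<in>A. adist E x s = 2" "\<forall>s\<in>A. adist E y s = 2" shows "x = y"
  using assms unfolding adj_resolving_set_def by metis

definition tri where
  "tri A a m u w \<longleftrightarrow> E m u \<and> E m w \<and> u \<noteq> w \<and> a \<in> Br m u \<and> (\<forall>s\<in>A. s \<noteq> a \<longrightarrow> s \<notin> Br m u \<and> s \<notin> Br m w)"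

lemma crit_tri: assumes "resolving_set V E A" "a \<in> A" "crit (A - {a}) m u w"
  shows "tri A a m u w \<or> tri A a m w u"
proof -
  have AV: "A \<subseteq> V" using assms unfolding resolving_set_def by auto
  have c: "E m u" "E m w" "u \<noteq> w" "\<forall>s\<in>A - {a}. s \<notin> Br m u \<and> s \<notin> Br m w"
    using assms unfolding crit_def by auto
  have "a \<in> Br m u \<or> a \<in> Br m w"
  proof (rule ccontr)
    assume "\<not> ?thesis"
    then have "crit A m u w" using c unfolding crit_def by auto
    then show False using crit_easy AV assms(1) by blast
  qed
  then show ?thesis using c unfolding tri_def by auto
qed

lemma free2: assumes "resolving_set V E A" "E v y1" "E v y2" "y1 \<noteq> y2"
  "\<forall>s\<in>A. s \<notin> Br v y1 \<and> s \<notin> Br v y2" shows False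
proof -
  have AV: "A \<subseteq> V" using assms unfolding resolving_set_def by auto
  have "crit A v y1 y2" using assms unfolding crit_def by auto
  then show False using crit_easy AV assms(1) by blast
qed

lemma one_branch: assumes "resolving_set V E A" "E v n1" "E v n2" "E v n3" "n1 \<noteq> n2" "n1 \<noteq> n3" "n2 \<noteq> n3"
  "E v y" "\<forall>s\<in>A. s \<in> Br v y \<or> s = v" shows False
proof -
  obtain y1 y2 where y: "y1 \<in> {n1,n2,n3}" "y2 \<in> {n1,n2,n3}" "y1 \<noteq> y2" "y1 \<noteq> y" "y2 \<noteq> y"
    using assms(5,6,7) by (metis insertCI)
  have e: "E v y1" "E v y2" using y assms(2,3,4) by auto
  have "\<forall>s\<in>A. s \<notin> Br v y1 \<and> s \<notin> Br v y2"
  proof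
    fix s assume s: "s \<in> A"
    show "s \<notin> Br v y1 \<and> s \<notin> Br v y2"
    proof (cases "s = v")
      case True then show ?thesis using Br_m by auto
    next
      case False then have "s \<in> Br v y" using assms(9) s by auto
      then show ?thesis using Br_disj[OF assms(8) e(1)] Br_disj[OF assms(8) e(2)] y by auto
    qed
  qed
  then show False using free2[OF assms(1) e y(3)] by auto
qed

end

context tr begin

lemma step_i: assumes AR: "adj_resolving_set V E A" and T: "\<forall>a\<in>A. \<exists>m u w. tri A a m u w"
  and aA: "a \<in> A"
  and n: "E v0 n1" "E v0 n2" "E v0 n3" "n1 \<noteq> n2" "n1 \<noteq> n3" "n2 \<noteq> n3"
  shows "\<exists>m u w. tri A a m u w \<and> m \<notin> A"
proof (rule ccontr)
  assume H: "\<not> ?thesis"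
  have R: "resolving_set V E A" using adj_res_res AR by auto
  have AV: "A \<subseteq> V" using AR unfolding adj_resolving_set_def by auto
  obtain b u w where tb: "tri A a b u w" using T aA by blast
  have bA: "b \<in> A" using H tb by blast
  have bu: "E b u" and bw: "E b w" and uw: "u \<noteq> w" and abu: "a \<in> Br b u"
    and fa: "\<forall>s\<in>A. s \<noteq> a \<longrightarrow> s \<notin> Br b u \<and> s \<notin> Br b w" using tb unfolding tri_def by auto
  have ab: "a \<noteq> b" using abu Br_m by auto
  have aV: "a \<in> V" and bV: "b \<in> V" using aA bA AV by auto
  have C: "\<And>m' u' w'. tri A b m' u' w' \<Longrightarrow> m' = a"
  proof (rule ccontr)
    fix m' u' w' assume t': "tri A b m' u' w'" and ma: "m' \<noteq> a"
    have mu': "E m' u'" and mw': "E m' w'" and uw': "u' \<noteq> w'" and bmu': "b \<in> Br m' u'"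
      and fb: "\<forall>s\<in>A. s \<noteq> b \<longrightarrow> s \<notin> Br m' u' \<and> s \<notin> Br m' w'" using t' unfolding tri_def by auto
    have anu': "a \<notin> Br m' u'" "a \<notin> Br m' w'" using fb aA ab by auto
    have m'V: "m' \<in> V" using EV mu' by auto
    have mbu: "m' \<in> Br b u"
    proof (rule ccontr)
      assume "m' \<notin> Br b u"
      then have "a \<in> Br m' u'" using D7[OF mu' bmu' bu _ abu] by auto
      then show False using anu' by auto
    qed
    have m'A: "m' \<notin> A" using fa mbu ma by auto
    obtain x where mx: "E m' x" "a \<in> Br m' x" using D2[OF aV m'V] ma by auto
    have xu': "x \<noteq> u'" using mx anu' by auto
    have xw': "x \<noteq> w'" using mx anu' by auto
    have bnx: "b \<notin> Br m' x" using Br_disj[OF mu' mx(1)] bmu' xu' by auto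
    have "tri A a m' x w'" unfolding tri_def
    proof (intro conjI ballI impI)
      show "E m' x" "E m' w'" "x \<noteq> w'" "a \<in> Br m' x" using mx mw' xw' by auto
    next
      fix s assume sA: "s \<in> A" and sa: "s \<noteq> a"
      show "s \<notin> Br m' x"
      proof
        assume "s \<in> Br m' x"
        then have "s \<in> Br b u" using D7[OF bu mbu mx(1) bnx] by auto
        then show False using fa sA sa by auto
      qed
      show "s \<notin> Br m' w'"
      proof (cases "s = b")
        case True then show ?thesis using Br_disj[OF mu' mw'] bmu' uw' by auto
      next
        case False then show ?thesis using fb sA by auto
      qed
    qed
    then show False using H m'A by blast
  qed
  obtain m' u' w' where t': "tri A b m' u' w'" using T bA by blast
  have "m' = a" using C t' by auto
  then have t'': "tri A b a u' w'" using t' by simp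
  have au': "E a u'" and bau': "b \<in> Br a u'" and fb: "\<forall>s\<in>A. s \<noteq> b \<longrightarrow> s \<notin> Br a u' \<and> s \<notin> Br a w'"
    using t'' unfolding tri_def by auto
  have Aab: "\<forall>s\<in>A. s = a \<or> s = b"
  proof (rule ccontr)
    assume "\<not> ?thesis"
    then obtain s where sA: "s \<in> A" "s \<noteq> a" "s \<noteq> b" by auto
    have sV: "s \<in> V" using sA AV by auto
    obtain y where y: "E b y" "s \<in> Br b y" using D2[OF sV bV] sA by auto
    have yu: "y \<noteq> u" using fa sA y by auto
    have "a \<notin> Br b y" using Br_disj[OF bu y(1)] abu yu by auto
    then have "s \<in> Br a u'" using D7[OF au' bau' y(1) _ y(2)] by auto
    then show False using fb sA by auto
  qed
  have uV: "u \<in> V" and wV: "w \<in> V" using EV bu bw by auto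
  have ub: "u \<noteq> b" and wb: "w \<noteq> b" using bu bw Ene by auto
  have "adist E w a = 2"
  proof -
    have "a \<notin> Br b w" using Br_disj[OF bu bw] abu uw by auto
    then have "d w a = d w b + d b a" using D4[OF bw Br_u[OF bw] aV] by auto
    moreover have "d w b = 1" using d_E[OF Esym[OF bw]] .
    moreover have "d b a \<noteq> 0" using d0 aV bV ab by auto
    ultimately show ?thesis unfolding adist2 by auto
  qed
  moreover have "adist E u b = adist E w b" using adist_eq[OF uV bV] adist_eq[OF wV bV] Esym[OF bu] Esym[OF bw] ub wb by auto
  moreover obtain z where "z \<in> A" "adist E u z \<noteq> adist E w z" using AR uV wV uw unfolding adj_resolving_set_def by blast
  ultimately have "adist E u a \<noteq> 2" using Aab by metis
  then have ua: "u = a \<or> E u a" using adist_eq[OF uV aV] by (auto split: if_splits)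
  show False
  proof (cases "u = a")
    case True
    have eab: "E a b" using Esym[OF bu] True by auto
    show ?thesis
    proof (cases "v0 = a")
      case True
      have "\<forall>s\<in>A. s \<in> Br a b \<or> s = a" using Aab Br_u[OF eab] by auto
      then show False using one_branch[OF R n[unfolded True] eab] by auto
    next
      case v0a: False
      show ?thesis
      proof (cases "v0 = b")
        case True
        have "\<forall>s\<in>A. s \<in> Br b u \<or> s = b" using Aab abu by auto
        then show False using one_branch[OF R n[unfolded True] bu] by auto
      next
        case False
        have v0V: "v0 \<in> V" using EV n(1) by auto
        obtain y where y: "E v0 y" "a \<in> Br v0 y" using D2[OF aV v0V] v0a by auto
        have "b \<in> Br v0 y" using D5[OF eab _ _ y(1) y(2)] v0a False by auto
        then have "\<forall>s\<in>A. s \<in> Br v0 y \<or> s = v0" using Aab y by auto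
        then show False using one_branch[OF R n y(1)] by auto
      qed
    qed
  next
    case False
    then have eua: "E u a" using ua by auto
    have eau: "E a u" using Esym[OF eua] .
    show ?thesis
    proof (cases "v0 = u")
      case True
      obtain z where z: "z \<in> {n1,n2,n3}" "z \<noteq> a" "z \<noteq> b"
        using n(4,5,6) by (metis insertCI)
      have uz: "E u z" using z n True by auto
      have ub': "E u b" using Esym[OF bu] .
      have "tri A a u a z" unfolding tri_def
      proof (intro conjI ballI impI)
        show "E u a" "E u z" "a \<noteq> z" "a \<in> Br u a" using eua uz z Br_u[OF eua] by auto
      next
        fix s assume "s \<in> A" "s \<noteq> a"
        then have sb: "s = b" using Aab by auto
        show "s \<notin> Br u a" using Br_disj[OF eua ub'] Br_u[OF ub'] sb ab by auto
        show "s \<notin> Br u z" using Br_disj[OF uz ub'] Br_u[OF ub'] sb z by auto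
      qed
      moreover have "u \<notin> A" using Aab False ub by auto
      ultimately show False using H by blast
    next
      case v0u: False
      show ?thesis
      proof (cases "v0 = a")
        case True
        have "b \<in> Br a u" using D5[OF Esym[OF bu] _ _ eau Br_u[OF eau]] ab False by auto
        then have "\<forall>s\<in>A. s \<in> Br a u \<or> s = a" using Aab by auto
        then show False using one_branch[OF R n[unfolded True] eau] by auto
      next
        case v0a: False
        show ?thesis
        proof (cases "v0 = b")
          case True
          have "\<forall>s\<in>A. s \<in> Br b u \<or> s = b" using Aab abu by auto
          then show False using one_branch[OF R n[unfolded True] bu] by auto
        next
          case False
          have v0V: "v0 \<in> V" using EV n(1) by auto
          obtain y where y: "E v0 y" "a \<in> Br v0 y" using D2[OF aV v0V] v0a by auto
          have "u \<in> Br v0 y" using D5[OF eau _ _ y(1) y(2)] v0a v0u by auto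
          then have "b \<in> Br v0 y" using D5[OF Esym[OF bu] _ _ y(1)] v0u False by auto
          then have "\<forall>s\<in>A. s \<in> Br v0 y \<or> s = v0" using Aab y by auto
          then show False using one_branch[OF R n y(1)] by auto
        qed
      qed
    qed
  qed
qed

end

context tr begin

lemma step_ii: assumes AR: "adj_resolving_set V E A" and t: "tri A a m u w" and aA: "a \<in> A" and mA: "m \<notin> A"
  shows "\<forall>z\<in>Br m w. \<forall>s\<in>A. adist E z s = 2" "\<forall>z\<in>Br m w. z = w" "\<forall>n. E w n \<longrightarrow> n = m"
proof -
  have AV: "A \<subseteq> V" using AR unfolding adj_resolving_set_def by auto
  have mu: "E m u" and mw: "E m w" and uw: "u \<noteq> w" and amu: "a \<in> Br m u"
    and fa: "\<forall>s\<in>A. s \<noteq> a \<longrightarrow> s \<notin> Br m u \<and> s \<notin> Br m w" using t unfolding tri_def by auto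
  have mV: "m \<in> V" using EV mu by auto
  show N: "\<forall>z\<in>Br m w. \<forall>s\<in>A. adist E z s = 2"
  proof (intro ballI)
    fix z s assume z: "z \<in> Br m w" and s: "s \<in> A"
    have sV: "s \<in> V" using s AV by auto
    have snw: "s \<notin> Br m w"
    proof (cases "s = a")
      case True then show ?thesis using Br_disj[OF mu mw] amu uw by auto
    next
      case False then show ?thesis using fa s by auto
    qed
    have "d z s = d z m + d m s" using D4[OF mw z sV snw] .
    moreover have "d m s \<noteq> 0" using d0 mV sV s mA by auto
    moreover have "d z m \<noteq> 0" using d0 BrV[OF z] mV z Br_m by auto
    ultimately show "adist E z s = 2" unfolding adist2 by auto
  qed
  have wV: "w \<in> V" using EV mw by auto
  show U: "\<forall>z\<in>Br m w. z = w"
    using N Br_u[OF mw] null_uniq[OF AR] BrV by metis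
  show "\<forall>n. E w n \<longrightarrow> n = m"
  proof (intro allI impI)
    fix n assume wn: "E w n"
    show "n = m"
    proof (rule ccontr)
      assume "n \<noteq> m"
      moreover have "w \<noteq> m" using Ene[OF mw] by auto
      ultimately have "n \<in> Br m w" using D5[OF wn _ _ mw Br_u[OF mw]] by auto
      then have "n = w" using U by auto
      then show False using wn Eirr by auto
    qed
  qed
qed

lemma core: assumes AR: "adj_resolving_set V E A" and T: "\<forall>a\<in>A. \<exists>m u w. tri A a m u w"
  and Ane: "A \<noteq> {}"
  and n: "E v0 n1" "E v0 n2" "E v0 n3" "n1 \<noteq> n2" "n1 \<noteq> n3" "n2 \<noteq> n3"
  shows "\<exists>c z0. E c z0 \<and> (\<forall>n. E z0 n \<longrightarrow> n = c) \<and> (\<forall>v\<in>V. v = c \<or> E c v \<or> (\<exists>y. E c y \<and> E y v \<and> v \<noteq> c))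
    \<and> (\<forall>y t1 t2. E c y \<longrightarrow> E y t1 \<longrightarrow> E y t2 \<longrightarrow> t1 \<noteq> c \<longrightarrow> t2 \<noteq> c \<longrightarrow> t1 = t2)
    \<and> (\<forall>y t n. E c y \<longrightarrow> E y t \<longrightarrow> t \<noteq> c \<longrightarrow> E t n \<longrightarrow> n = y) \<and> v0 = c"
proof -
  have R: "resolving_set V E A" using adj_res_res AR by auto
  have AV: "A \<subseteq> V" using AR unfolding adj_resolving_set_def by auto
  have SI: "\<And>a. a \<in> A \<Longrightarrow> \<exists>m u w. tri A a m u w \<and> m \<notin> A" using step_i[OF AR T _ n] by blast
  obtain a0 where a0: "a0 \<in> A" using Ane by auto
  obtain c u0 z0 where t0: "tri A a0 c u0 z0" and cA: "c \<notin> A" using SI[OF a0] by blast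
  have cz0: "E c z0" using t0 unfolding tri_def by auto
  have cV: "c \<in> V" and z0V: "z0 \<in> V" using EV cz0 by auto
  note ii0 = step_ii[OF AR t0 a0 cA]
  have z0null: "\<forall>s\<in>A. adist E z0 s = 2" using ii0(1) Br_u[OF cz0] by auto
  have z0leaf: "\<forall>n. E z0 n \<longrightarrow> n = c" using ii0(3) .
  have z0A: "z0 \<notin> A" using z0null adist_eq[OF z0V z0V] by force
  have Bz0: "\<forall>z\<in>Br c z0. z = z0" using ii0(2) .
  have M: "\<And>a m u w. a \<in> A \<Longrightarrow> tri A a m u w \<Longrightarrow> m \<notin> A \<Longrightarrow> m = c \<and> w = z0"
  proof -
    fix a m u w assume aA: "a \<in> A" and t: "tri A a m u w" and mA: "m \<notin> A"
    note ii = step_ii[OF AR t aA mA]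
    have mw: "E m w" using t unfolding tri_def by auto
    have wV: "w \<in> V" using EV mw by auto
    have "\<forall>s\<in>A. adist E w s = 2" using ii(1) Br_u[OF mw] by auto
    then have "w = z0" using null_uniq[OF AR wV z0V] z0null by auto
    moreover have "m = c" using z0leaf Esym[OF mw] calculation by auto
    ultimately show "m = c \<and> w = z0" by auto
  qed
  have B: "\<And>y. E c y \<Longrightarrow> y \<noteq> z0 \<Longrightarrow> \<exists>a\<in>A. tri A a c y z0"
  proof -
    fix y assume cy: "E c y" and yz: "y \<noteq> z0"
    have "\<exists>a\<in>A. a \<in> Br c y"
    proof (rule ccontr)
      assume "\<not> ?thesis"
      then have "\<forall>s\<in>A. s \<notin> Br c y \<and> s \<notin> Br c z0" using Bz0 z0A by auto
      then show False using free2[OF R cy cz0 yz] by auto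
    qed
    then obtain a where aA: "a \<in> A" and acy: "a \<in> Br c y" by auto
    obtain m u w where t: "tri A a m u w" and mA: "m \<notin> A" using SI[OF aA] by blast
    have mc: "m = c" and wz: "w = z0" using M[OF aA t mA] by auto
    have "a \<in> Br c u" "E c u" using t mc unfolding tri_def by auto
    then have "u = y" using Br_disj[OF _ cy] acy by auto
    then show "\<exists>a\<in>A. tri A a c y z0" using t mc wz aA by auto
  qed
  have V2: "\<And>y z z'. E c y \<Longrightarrow> y \<noteq> z0 \<Longrightarrow> z \<in> Br c y \<Longrightarrow> z' \<in> Br c y \<Longrightarrow> z \<noteq> y \<Longrightarrow> z' \<noteq> y \<Longrightarrow> z = z'"
  proof -
    fix y z z' assume cy: "E c y" and yz0: "y \<noteq> z0" and z: "z \<in> Br c y" and z': "z' \<in> Br c y"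
      and zy: "z \<noteq> y" and z'y: "z' \<noteq> y"
    obtain a where aA: "a \<in> A" and t: "tri A a c y z0" using B[OF cy yz0] by blast
    have fa: "\<forall>s\<in>A. s \<noteq> a \<longrightarrow> s \<notin> Br c y" using t unfolding tri_def by auto
    have aV: "a \<in> V" using aA AV by auto
    have other: "\<And>x s. x \<in> Br c y \<Longrightarrow> s \<in> A \<Longrightarrow> s \<noteq> a \<Longrightarrow> adist E x s = 2"
    proof -
      fix x s assume x: "x \<in> Br c y" and s: "s \<in> A" and sa: "s \<noteq> a"
      have sV: "s \<in> V" using s AV by auto
      have "d x s = d x c + d c s" using D4[OF cy x sV] fa s sa by auto
      moreover have "d c s \<noteq> 0" using d0 cV sV s cA by auto
      moreover have "d x c \<noteq> 0" using d0 BrV[OF x] cV x Br_m by auto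
      ultimately show "adist E x s = 2" unfolding adist2 by auto
    qed
    have notnull: "\<And>x. x \<in> Br c y \<Longrightarrow> adist E x a \<noteq> 2"
    proof
      fix x assume x: "x \<in> Br c y" and x2: "adist E x a = 2"
      have "\<forall>s\<in>A. adist E x s = 2" using other[OF x] x2 by auto
      then have "x = z0" using null_uniq[OF AR BrV[OF x] z0V] z0null by auto
      then show False using Br_disj[OF cy cz0] x Br_u[OF cz0] yz0 by auto
    qed
    have inj: "\<And>x1 x2. x1 \<in> Br c y \<Longrightarrow> x2 \<in> Br c y \<Longrightarrow> adist E x1 a = adist E x2 a \<Longrightarrow> x1 = x2"
    proof (rule ccontr)
      fix x1 x2 assume x1: "x1 \<in> Br c y" and x2: "x2 \<in> Br c y" and eq: "adist E x1 a = adist E x2 a"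
        and ne: "x1 \<noteq> x2"
      obtain s where s: "s \<in> A" "adist E x1 s \<noteq> adist E x2 s"
        using AR BrV[OF x1] BrV[OF x2] ne unfolding adj_resolving_set_def by blast
      show False using s eq other[OF x1] other[OF x2] by (cases "s = a") auto
    qed
    have val: "\<And>x. x \<in> Br c y \<Longrightarrow> adist E x a = 0 \<or> adist E x a = 1"
      using notnull adist_eq aV BrV by (metis (full_types))
    have yB: "y \<in> Br c y" using Br_u[OF cy] .
    show "z = z'"
    proof (rule ccontr)
      assume "z \<noteq> z'"
      then show False using inj[OF yB z] inj[OF yB z'] inj[OF z z'] val[OF yB] val[OF z] val[OF z'] zy z'y
        by metis
    qed
  qed
  have S2: "\<forall>y t1 t2. E c y \<longrightarrow> E y t1 \<longrightarrow> E y t2 \<longrightarrow> t1 \<noteq> c \<longrightarrow> t2 \<noteq> c \<longrightarrow> t1 = t2"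
  proof (intro allI impI)
    fix y t1 t2 assume cy: "E c y" and yt1: "E y t1" and yt2: "E y t2" and t1c: "t1 \<noteq> c" and t2c: "t2 \<noteq> c"
    have yc: "y \<noteq> c" using Ene[OF cy] by auto
    have yz0: "y \<noteq> z0" using z0leaf yt1 t1c by auto
    have "t1 \<in> Br c y" using D5[OF yt1 yc t1c cy Br_u[OF cy]] .
    moreover have "t2 \<in> Br c y" using D5[OF yt2 yc t2c cy Br_u[OF cy]] .
    moreover have "t1 \<noteq> y" "t2 \<noteq> y" using Ene yt1 yt2 by auto
    ultimately show "t1 = t2" using V2[OF cy yz0] by auto
  qed
  have S3: "\<forall>y t n. E c y \<longrightarrow> E y t \<longrightarrow> t \<noteq> c \<longrightarrow> E t n \<longrightarrow> n = y"
  proof (intro allI impI)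
    fix y t n assume cy: "E c y" and yt: "E y t" and tc: "t \<noteq> c" and tn: "E t n"
    have yc: "y \<noteq> c" using Ene[OF cy] by auto
    have yz0: "y \<noteq> z0" using z0leaf yt tc by auto
    have tB: "t \<in> Br c y" using D5[OF yt yc tc cy Br_u[OF cy]] .
    have ty: "t \<noteq> y" using Ene yt by auto
    have nc: "n \<noteq> c"
    proof
      assume "n = c"
      then have "d t c = 1" using d_E tn by auto
      then have "d t y = 0" using tB unfolding Br_def by auto
      then show False using d0 BrV[OF tB] EV[OF yt] ty by auto
    qed
    have nB: "n \<in> Br c y" using D5[OF tn tc nc cy tB] .
    show "n = y"
    proof (rule ccontr)
      assume "n \<noteq> y"
      then have "n = t" using V2[OF cy yz0 nB tB _ ty] by auto
      then show False using tn Eirr by auto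
    qed
  qed
  have S1: "\<forall>v\<in>V. v = c \<or> E c v \<or> (\<exists>y. E c y \<and> E y v \<and> v \<noteq> c)"
  proof
    fix v assume vV: "v \<in> V"
    show "v = c \<or> E c v \<or> (\<exists>y. E c y \<and> E y v \<and> v \<noteq> c)"
    proof (cases "v = c")
      case True then show ?thesis by auto
    next
      case vc: False
      obtain y where cy: "E c y" and vB: "v \<in> Br c y" using D2[OF vV cV vc] by auto
      show ?thesis
      proof (cases "y = z0")
        case True then show ?thesis using Bz0 vB cz0 by auto
      next
        case yz0: False
        show ?thesis
        proof (cases "v = y")
          case True then show ?thesis using cy by auto
        next
          case vy: False
          obtain p where vp: "E v p" and dp: "d p c + 1 = d v c" using d_closer[OF vV cV vc] by auto
          have pc: "p \<noteq> c"
          proof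
            assume "p = c"
            then have "d v c = 1" using dp by auto
            then have "d v y = 0" using vB unfolding Br_def by auto
            then show False using d0 vV EV[OF cy] vy by auto
          qed
          have pB: "p \<in> Br c y" using D5[OF vp vc pc cy vB] .
          have "p = y"
          proof (rule ccontr)
            assume "p \<noteq> y"
            then have "p = v" using V2[OF cy yz0 pB vB _ vy] by auto
            then show False using vp Eirr by auto
          qed
          then show ?thesis using cy Esym[OF vp] vc by auto
        qed
      qed
    qed
  qed
  have v0c: "v0 = c"
  proof (rule ccontr)
    assume v0c: "v0 \<noteq> c"
    have v0V: "v0 \<in> V" using EV n(1) by auto
    consider "E c v0" | y where "E c y" "E y v0" using S1 v0V v0c by auto
    then show False
    proof cases
      case 1
      have "v0 \<noteq> z0" using z0leaf n by auto
      show False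
      proof -
        obtain p q where pq: "p \<in> {n1,n2,n3}" "q \<in> {n1,n2,n3}" "p \<noteq> q" "p \<noteq> c" "q \<noteq> c"
          using n(4,5,6) by (metis insertCI)
        have "E v0 p" "E v0 q" using pq n by auto
        then show False using S2 1 pq by metis
      qed
    next
      case 2
      have "\<forall>x. E v0 x \<longrightarrow> x = y" using S3 2 v0c by metis
      then show False using n by metis
    qed
  qed
  show ?thesis using cz0 z0leaf S1 S2 S3 v0c by blast
qed

end

lemma iso_from_inv: assumes "bij_betw h W V" "\<forall>i\<in>W. \<forall>j\<in>W. F i j \<longleftrightarrow> E (h i) (h j)"
  shows "graph_iso V E W F"
proof -
  let ?f = "inv_into W h"
  have b: "bij_betw ?f V W" using bij_betw_inv_into[OF assms(1)] .
  have "\<forall>x\<in>V. \<forall>y\<in>V. E x y \<longleftrightarrow> F (?f x) (?f y)"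
  proof (intro ballI)
    fix x y assume x: "x \<in> V" and y: "y \<in> V"
    have fx: "?f x \<in> W" "?f y \<in> W" using b x y bij_betwE by blast+
    have "h (?f x) = x" "h (?f y) = y" using bij_betw_inv_into_right[OF assms(1)] x y by auto
    then show "E x y \<longleftrightarrow> F (?f x) (?f y)" using assms(2) fx by metis
  qed
  then show ?thesis unfolding graph_iso_def using b by blast
qed

context tr begin

lemma spider_recog: assumes cz0: "E c z0" and z0leaf: "\<forall>n. E z0 n \<longrightarrow> n = c"
  and S1: "\<forall>v\<in>V. v = c \<or> E c v \<or> (\<exists>y. E c y \<and> E y v \<and> v \<noteq> c)"
  and S2: "\<forall>y t1 t2. E c y \<longrightarrow> E y t1 \<longrightarrow> E y t2 \<longrightarrow> t1 \<noteq> c \<longrightarrow> t2 \<noteq> c \<longrightarrow> t1 = t2"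
  and S3: "\<forall>y t n. E c y \<longrightarrow> E y t \<longrightarrow> t \<noteq> c \<longrightarrow> E t n \<longrightarrow> n = y"
  and n: "E c n1" "E c n2" "E c n3" "n1 \<noteq> n2" "n1 \<noteq> n3" "n2 \<noteq> n3"
  shows "\<exists>x k::nat. x \<ge> 3 \<and> k \<le> x - 1 \<and> graph_iso V E (spider_V x k) (spider_E x k)"
proof -
  define N where "N = {y. E c y}"
  define L2 where "L2 = {y \<in> N. \<exists>t. E y t \<and> t \<noteq> c}"
  define L1 where "L1 = N - L2"
  define x where "x = card N"
  define k where "k = card L2"
  define tl where "tl y = (SOME t. E y t \<and> t \<noteq> c)" for y
  have cV: "c \<in> V" using EV cz0 by auto
  have NV: "N \<subseteq> V" unfolding N_def using EV by auto
  have finN: "finite N" using finite_subset[OF NV finV] .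
  have L2N: "L2 \<subseteq> N" unfolding L2_def by auto
  have finL2: "finite L2" using finite_subset[OF L2N finN] .
  have finL1: "finite L1" unfolding L1_def using finN by auto
  have z0L1: "z0 \<in> L1" unfolding L1_def L2_def N_def using cz0 z0leaf by auto
  have kx: "k < x" unfolding k_def x_def using psubset_card_mono[OF finN] L2N z0L1 unfolding L1_def by blast
  have x3: "x \<ge> 3"
  proof -
    have "{n1,n2,n3} \<subseteq> N" unfolding N_def using n by auto
    then have "card {n1,n2,n3} \<le> x" unfolding x_def using card_mono[OF finN] by blast
    then show ?thesis using n by auto
  qed
  have cL1: "card L1 = x - k" unfolding L1_def x_def k_def using card_Diff_subset[OF finL2 L2N] .
  obtain e2 where e2: "bij_betw e2 {1..k} L2" using finite_same_card_bij[OF _ finL2] unfolding k_def by force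
  obtain e1 where e1: "bij_betw e1 {k+1..x} L1" using finite_same_card_bij[OF _ finL1] cL1 kx by force
  have tl: "\<And>y. y \<in> L2 \<Longrightarrow> E y (tl y) \<and> tl y \<noteq> c"
    unfolding tl_def L2_def by (rule someI_ex) auto
  have tl_only: "\<And>y m. y \<in> L2 \<Longrightarrow> E (tl y) m \<Longrightarrow> m = y"
    using S3 tl L2N unfolding N_def by blast
  have tlN: "\<And>y. y \<in> L2 \<Longrightarrow> tl y \<notin> N"
  proof
    fix y assume y: "y \<in> L2" and "tl y \<in> N"
    then have "E (tl y) c" unfolding N_def using Esym by blast
    then have "c = y" using tl_only[OF y] by blast
    then show False using y L2N Eirr unfolding N_def by auto
  qed
  have L1only: "\<And>y m. y \<in> L1 \<Longrightarrow> E y m \<Longrightarrow> m = c" unfolding L1_def L2_def by auto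
  have NN: "\<And>y y'. y \<in> N \<Longrightarrow> y' \<in> N \<Longrightarrow> \<not> E y y'"
  proof
    fix y y' assume y: "y \<in> N" and y': "y' \<in> N" and yy: "E y y'"
    have "E c y" "E y' c" using y Esym[of c y'] y' unfolding N_def by auto
    moreover have "y' \<noteq> c" using y' Eirr unfolding N_def by auto
    ultimately have "c = y" using S3 yy by blast
    then show False using y Eirr unfolding N_def by auto
  qed
  have cN: "c \<notin> N" unfolding N_def using Eirr by auto
  define W where "W = {0..x+k}"
  define h where "h i = (if i = 0 then c else if i \<le> k then tl (e2 i) else if i \<le> x then e1 i else e2 (i - x))" for i
  have e2m: "\<And>i. i \<in> {1..k} \<Longrightarrow> e2 i \<in> L2" using e2 bij_betwE by blast
  have e1m: "\<And>i. i \<in> {k+1..x} \<Longrightarrow> e1 i \<in> L1" using e1 bij_betwE by blast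
  have e2i: "\<And>i j. i \<in> {1..k} \<Longrightarrow> j \<in> {1..k} \<Longrightarrow> e2 i = e2 j \<Longrightarrow> i = j"
    using e2 unfolding bij_betw_def inj_on_def by blast
  have e1i: "\<And>i j. i \<in> {k+1..x} \<Longrightarrow> j \<in> {k+1..x} \<Longrightarrow> e1 i = e1 j \<Longrightarrow> i = j"
    using e1 unfolding bij_betw_def inj_on_def by blast
  have L12: "L1 \<inter> L2 = {}" unfolding L1_def by auto
  have L1N: "L1 \<subseteq> N" unfolding L1_def by auto
  have hR: "\<And>i. i \<in> W \<Longrightarrow> (i = 0 \<and> h i = c) \<or> (1 \<le> i \<and> i \<le> k \<and> h i = tl (e2 i) \<and> e2 i \<in> L2)
     \<or> (k < i \<and> i \<le> x \<and> h i = e1 i \<and> e1 i \<in> L1) \<or> (x < i \<and> i \<le> x + k \<and> h i = e2 (i - x) \<and> e2 (i - x) \<in> L2)"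
  proof -
    fix i assume i: "i \<in> W"
    consider "i = 0" | "1 \<le> i" "i \<le> k" | "k < i" "i \<le> x" | "x < i" "i \<le> x + k" using i kx unfolding W_def by force
    then show "?thesis i"
    proof cases
      case 1 then show ?thesis unfolding h_def by auto
    next
      case 2 then show ?thesis unfolding h_def using e2m by auto
    next
      case 3 then show ?thesis unfolding h_def using e1m kx by auto
    next
      case 4 then have "i - x \<in> {1..k}" by auto
      then show ?thesis unfolding h_def using e2m 4 kx by auto
    qed
  qed
  have tlc: "\<And>y. y \<in> L2 \<Longrightarrow> tl y \<noteq> c" using tl by blast
  have tlinj: "\<And>y y'. y \<in> L2 \<Longrightarrow> y' \<in> L2 \<Longrightarrow> tl y = tl y' \<Longrightarrow> y = y'"
  proof -
    fix y y' assume y: "y \<in> L2" and y': "y' \<in> L2" and eq: "tl y = tl y'"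
    have "E (tl y') y'" using tl[OF y'] Esym by blast
    then have "E (tl y) y'" using eq by simp
    then show "y = y'" using tl_only[OF y] by auto
  qed
  have F1: "c \<notin> L1" "c \<notin> L2" "\<And>y. y \<in> L1 \<Longrightarrow> y \<notin> L2" "\<And>y. y \<in> L1 \<Longrightarrow> y \<noteq> c"
    "\<And>y. y \<in> L2 \<Longrightarrow> y \<noteq> c"
    using cN L1N L2N L12 by auto
  have F2: "\<And>y. y \<in> L2 \<Longrightarrow> tl y \<notin> L1" "\<And>y. y \<in> L2 \<Longrightarrow> tl y \<notin> L2"
    using tlN L1N L2N by auto
  have F3a: "\<And>a b. a \<in> {1..k} \<Longrightarrow> b \<in> {1..k} \<Longrightarrow> tl (e2 a) = tl (e2 b) \<longleftrightarrow> a = b"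
  proof -
    fix a b assume a: "a \<in> {1..k}" and b: "b \<in> {1..k}"
    show "tl (e2 a) = tl (e2 b) \<longleftrightarrow> a = b"
    proof
      assume "tl (e2 a) = tl (e2 b)"
      then have "e2 a = e2 b" using tlinj[OF e2m[OF a] e2m[OF b]] by blast
      then show "a = b" using e2i[OF a b] by blast
    qed simp
  qed
  have F3b: "\<And>a b. a \<in> {1..k} \<Longrightarrow> b \<in> {1..k} \<Longrightarrow> e2 a = e2 b \<longleftrightarrow> a = b"
    using e2i by blast
  have F3c: "\<And>a b. a \<in> {k+1..x} \<Longrightarrow> b \<in> {k+1..x} \<Longrightarrow> e1 a = e1 b \<longleftrightarrow> a = b"
    using e1i by blast
  have F3d: "\<And>a b. x < a \<Longrightarrow> a \<le> x + k \<Longrightarrow> x < b \<Longrightarrow> b \<le> x + k \<Longrightarrow> e2 (a - x) = e2 (b - x) \<longleftrightarrow> a = b"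
  proof -
    fix a b :: nat assume "x < a" "a \<le> x + k" "x < b" "b \<le> x + k"
    then have ab: "a - x \<in> {1..k}" "b - x \<in> {1..k}" by auto
    show "e2 (a - x) = e2 (b - x) \<longleftrightarrow> a = b"
    proof
      assume "e2 (a - x) = e2 (b - x)"
      then have "a - x = b - x" using e2i[OF ab] by blast
      then show "a = b" using \<open>x < a\<close> \<open>x < b\<close> by auto
    qed simp
  qed
  have tlN2: "\<And>b. b \<in> {1..k} \<Longrightarrow> tl (e2 b) \<notin> N" using tlN e2m by blast
  have e2N: "\<And>b. b \<in> {1..k} \<Longrightarrow> e2 b \<in> N" using L2N e2m by blast
  have e1N: "\<And>b. b \<in> {k+1..x} \<Longrightarrow> e1 b \<in> N"
  proof -
    fix b assume b: "b \<in> {k+1..x}"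
    show "e1 b \<in> N" using e1m[OF b] L1N by (rule subsetD[rotated])
  qed
  have e12: "\<And>a b. a \<in> {k+1..x} \<Longrightarrow> b \<in> {1..k} \<Longrightarrow> e1 a \<noteq> e2 b"
  proof -
    fix a b assume a: "a \<in> {k+1..x}" and b: "b \<in> {1..k}"
    have "e1 a \<in> L1" "e2 b \<in> L2" using e1m[OF a] e2m[OF b] .
    then show "e1 a \<noteq> e2 b" using L12 by auto
  qed
  have F4: "\<And>a b. a \<in> {1..k} \<Longrightarrow> b \<in> {1..k} \<Longrightarrow> e2 a = tl (e2 b) \<longleftrightarrow> False"
    "\<And>a b. a \<in> {k+1..x} \<Longrightarrow> b \<in> {1..k} \<Longrightarrow> e1 a = tl (e2 b) \<longleftrightarrow> False"
    "\<And>a b. a \<in> {k+1..x} \<Longrightarrow> b \<in> {1..k} \<Longrightarrow> e1 a = e2 b \<longleftrightarrow> False"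
    "\<And>b. b \<in> {1..k} \<Longrightarrow> c = tl (e2 b) \<longleftrightarrow> False"
    "\<And>b. b \<in> {1..k} \<Longrightarrow> c = e2 b \<longleftrightarrow> False"
    "\<And>b. b \<in> {k+1..x} \<Longrightarrow> c = e1 b \<longleftrightarrow> False"
    "\<And>a b. a \<in> {1..k} \<Longrightarrow> b \<in> {1..k} \<Longrightarrow> tl (e2 b) = e2 a \<longleftrightarrow> False"
    "\<And>a b. a \<in> {k+1..x} \<Longrightarrow> b \<in> {1..k} \<Longrightarrow> tl (e2 b) = e1 a \<longleftrightarrow> False"
    "\<And>a b. a \<in> {k+1..x} \<Longrightarrow> b \<in> {1..k} \<Longrightarrow> e2 b = e1 a \<longleftrightarrow> False"
    using tlN2 e2N e1N e12 tlc e2m cN by metis+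
  have off: "\<And>a. x < a \<Longrightarrow> a \<le> x + k \<Longrightarrow> a - x \<in> {1..k}" by auto
  have F6: "\<And>a b. x < a \<Longrightarrow> a \<le> x + k \<Longrightarrow> b \<in> {1..k} \<Longrightarrow> tl (e2 b) = e2 (a - x) \<longleftrightarrow> False"
    "\<And>a b. x < a \<Longrightarrow> a \<le> x + k \<Longrightarrow> b \<in> {1..k} \<Longrightarrow> e2 (a - x) = tl (e2 b) \<longleftrightarrow> False"
    "\<And>a b. x < a \<Longrightarrow> a \<le> x + k \<Longrightarrow> b \<in> {k+1..x} \<Longrightarrow> e1 b = e2 (a - x) \<longleftrightarrow> False"
    "\<And>a b. x < a \<Longrightarrow> a \<le> x + k \<Longrightarrow> b \<in> {k+1..x} \<Longrightarrow> e2 (a - x) = e1 b \<longleftrightarrow> False"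
    "\<And>a. x < a \<Longrightarrow> a \<le> x + k \<Longrightarrow> c = e2 (a - x) \<longleftrightarrow> False"
    "\<And>a. x < a \<Longrightarrow> a \<le> x + k \<Longrightarrow> e2 (a - x) \<noteq> c"
    "\<And>a. x < a \<Longrightarrow> a \<le> x + k \<Longrightarrow> e2 (a - x) \<in> L2"
    "\<And>a. x < a \<Longrightarrow> a \<le> x + k \<Longrightarrow> e2 (a - x) \<in> N"
    "\<And>a b. x < a \<Longrightarrow> a \<le> x + k \<Longrightarrow> b \<in> {1..k} \<Longrightarrow> tl (e2 b) = tl (e2 (a - x)) \<longleftrightarrow> b = a - x"
    "\<And>a b. x < a \<Longrightarrow> a \<le> x + k \<Longrightarrow> x < b \<Longrightarrow> b \<le> x + k \<Longrightarrow> e2 (a - x) = tl (e2 (b - x)) \<longleftrightarrow> False"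
    using F4 off F3a e2m e2N by (metis, metis, metis, metis, metis, metis, metis, metis, metis, metis)
  note F3 = F3a F3b F3c F6
  note F5 = F3d
  have char: "\<And>u v. E u v \<longleftrightarrow> (u = c \<and> v \<in> N) \<or> (v = c \<and> u \<in> N) \<or> (u \<in> L2 \<and> v = tl u) \<or> (v \<in> L2 \<and> u = tl v)"
  proof
    fix u v assume uv: "E u v"
    show "(u = c \<and> v \<in> N) \<or> (v = c \<and> u \<in> N) \<or> (u \<in> L2 \<and> v = tl u) \<or> (v \<in> L2 \<and> u = tl v)"
    proof (cases "u = c \<or> v = c")
      case True then show ?thesis using uv Esym[OF uv] unfolding N_def by auto
    next
      case False
      have uV: "u \<in> V" using EV uv by auto
      consider "E c u" | y where "E c y" "E y u" "u \<noteq> c" using S1 uV False by blast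
      then show ?thesis
      proof cases
        case 1
        have uL2: "u \<in> L2" unfolding L2_def N_def using 1 uv False by auto
        have "v = tl u" using S2 1 uv False tl[OF uL2] by blast
        then show ?thesis using uL2 by auto
      next
        case 2
        have "v = y" using S3 2 uv by blast
        moreover have yL2: "y \<in> L2" unfolding L2_def N_def using 2 by auto
        moreover have "u = tl y" using S2 2 tl[OF yL2] by blast
        ultimately show ?thesis by auto
      qed
    qed
  next
    fix u v
    assume "(u = c \<and> v \<in> N) \<or> (v = c \<and> u \<in> N) \<or> (u \<in> L2 \<and> v = tl u) \<or> (v \<in> L2 \<and> u = tl v)"
    then show "E u v" unfolding N_def using tl Esym by blast
  qed
  have memN: "\<And>y. y \<in> L1 \<Longrightarrow> y \<in> N" "\<And>y. y \<in> L2 \<Longrightarrow> y \<in> N" "\<And>y. y \<in> L2 \<Longrightarrow> tl y \<notin> N"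
    using L1N L2N tlN by auto
  have inj: "inj_on h W"
  proof (rule inj_onI)
    fix i j assume i: "i \<in> W" and j: "j \<in> W" and hij: "h i = h j"
    from hR[OF i] hR[OF j] hij show "i = j"
      apply (elim disjE conjE)
      subgoal by (simp add: F1 F2 F3 F4 F5 tlc)
      subgoal by (simp add: F1 F2 F3 F4 F5 tlc)
      subgoal by (simp add: F1 F2 F3 F4 F5 tlc)
      subgoal by (simp add: F1 F2 F3 F4 F5 tlc)
      subgoal by (simp add: F1 F2 F3 F4 F5 tlc)
      subgoal by (simp add: F1 F2 F3 F4 F5 tlc)
      subgoal by (simp add: F1 F2 F3 F4 F5 tlc)
      subgoal by (simp add: F1 F2 F3 F4 F5 tlc)
      subgoal by (simp add: F1 F2 F3 F4 F5 tlc)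
      subgoal by (simp add: F1 F2 F3 F4 F5 tlc)
      subgoal by (simp add: F1 F2 F3 F4 F5 tlc)
      subgoal by (simp add: F1 F2 F3 F4 F5 tlc)
      subgoal by (simp add: F1 F2 F3 F4 F5 tlc)
      subgoal by (simp add: F1 F2 F3 F4 F5 tlc)
      subgoal by (simp add: F1 F2 F3 F4 F5 tlc)
      subgoal by (simp add: F1 F2 F3 F4 F5 tlc)
      done
  qed
  have img: "h ` W = V"
  proof
    show "h ` W \<subseteq> V"
    proof
      fix v assume "v \<in> h ` W"
      then obtain i where i: "i \<in> W" "v = h i" by auto
      have tlV: "\<And>y. y \<in> L2 \<Longrightarrow> tl y \<in> V"
      proof -
        fix y assume "y \<in> L2" then have "E y (tl y)" using tl by blast
        then show "tl y \<in> V" using EV by blast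
      qed
      show "v \<in> V" using hR[OF i(1)] i(2) cV NV L1N L2N tlV by auto
    qed
  next
    show "V \<subseteq> h ` W"
    proof
      fix v assume vV: "v \<in> V"
      consider "v = c" | "v \<in> L1" | "v \<in> L2" | y where "y \<in> L2" "v = tl y"
      proof -
        consider "v = c" | "E c v" | y where "E c y" "E y v" "v \<noteq> c" using S1 vV by blast
        then show ?thesis
        proof cases
          case 1 then show ?thesis using that by auto
        next
          case 2 then show ?thesis using that unfolding L1_def N_def by blast
        next
          case 3
          have yL2: "y \<in> L2" unfolding L2_def N_def using 3 by auto
          have "v = tl y" using S2 3 tl[OF yL2] L2N unfolding N_def by blast
          then show ?thesis using that yL2 by blast
        qed
      qed
      then show "v \<in> h ` W"
      proof cases
        case 1 then have "h 0 = v" unfolding h_def by auto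
          then show ?thesis unfolding W_def by force
      next
        case 2
        then obtain i where i: "i \<in> {k+1..x}" "e1 i = v" using e1 unfolding bij_betw_def by blast
        then have "h i = v" unfolding h_def using kx by auto
        then show ?thesis using i unfolding W_def by force
      next
        case 3
        then obtain i where i: "i \<in> {1..k}" "e2 i = v" using e2 unfolding bij_betw_def by blast
        then have "h (x + i) = v" unfolding h_def using kx by auto
        then show ?thesis using i unfolding W_def by force
      next
        case 4
        then obtain i where i: "i \<in> {1..k}" "e2 i = y" using e2 unfolding bij_betw_def by blast
        then have "h i = v" unfolding h_def using 4 by auto
        then show ?thesis using i kx unfolding W_def by force
      qed
    qed
  qed
  have bij: "bij_betw h W V" unfolding bij_betw_def using inj img by auto
  have edges: "\<forall>i\<in>W. \<forall>j\<in>W. spider_E x k i j \<longleftrightarrow> E (h i) (h j)"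
  proof (intro ballI)
    fix i j assume i: "i \<in> W" and j: "j \<in> W"
    have SE: "spider_E x k i j \<longleftrightarrow> (i = 0 \<and> k < j) \<or> (j = 0 \<and> k < i) \<or> (1 \<le> i \<and> i \<le> k \<and> j = x + i) \<or> (1 \<le> j \<and> j \<le> k \<and> i = x + j)"
      using i j kx unfolding spider_E_def spider_E0_def W_def by auto
    from hR[OF i] hR[OF j] show "spider_E x k i j \<longleftrightarrow> E (h i) (h j)"
      unfolding SE char
      apply (elim disjE conjE)
      subgoal using kx by (auto simp add: F1 F2 F3 F4 F5 tlc memN cN)
      subgoal using kx by (auto simp add: F1 F2 F3 F4 F5 tlc memN cN)
      subgoal using kx by (auto simp add: F1 F2 F3 F4 F5 tlc memN cN)
      subgoal using kx by (auto simp add: F1 F2 F3 F4 F5 tlc memN cN)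
      subgoal using kx by (auto simp add: F1 F2 F3 F4 F5 tlc memN cN)
      subgoal using kx by (auto simp add: F1 F2 F3 F4 F5 tlc memN cN)
      subgoal using kx by (auto simp add: F1 F2 F3 F4 F5 tlc memN cN)
      subgoal using kx by (auto simp add: F1 F2 F3 F4 F5 tlc memN cN)
      subgoal using kx by (auto simp add: F1 F2 F3 F4 F5 tlc memN cN)
      subgoal using kx by (auto simp add: F1 F2 F3 F4 F5 tlc memN cN)
      subgoal using kx by (auto simp add: F1 F2 F3 F4 F5 tlc memN cN)
      subgoal using kx by (auto simp add: F1 F2 F3 F4 F5 tlc memN cN)
      subgoal using kx by (auto simp add: F1 F2 F3 F4 F5 tlc memN cN)
      subgoal using kx by (auto simp add: F1 F2 F3 F4 F5 tlc memN cN)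
      subgoal using kx by (auto simp add: F1 F2 F3 F4 F5 tlc memN cN)
      subgoal using kx by (auto simp add: F1 F2 F3 F4 F5 tlc memN cN)
      done
  qed
  have "graph_iso V E (spider_V x k) (spider_E x k)"
    using iso_from_inv[OF bij edges] unfolding W_def spider_V_def .
  then show ?thesis using x3 kx by (intro exI[of _ x] exI[of _ k]) auto
qed

end

context tr begin

lemma two_elems: assumes "card V \<ge> 2" shows "\<exists>x y. x \<in> V \<and> y \<in> V \<and> x \<noteq> y"
proof (rule ccontr)
  assume "\<not> ?thesis"
  then have all: "\<forall>x\<in>V. \<forall>y\<in>V. x = y" by blast
  obtain z where zV: "z \<in> V" using Vne by auto
  have "V \<subseteq> {z}" using all zV by blast
  then have "card V \<le> card {z}" by (rule card_mono[rotated]) simp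
  then show False using assms by simp
qed

lemma leaf_ex: assumes "card V \<ge> 2" shows "\<exists>l c. E l c \<and> (\<forall>n. E l n \<longrightarrow> n = c)"
proof -
  obtain z where zV: "z \<in> V" using Vne by auto
  obtain w where wV: "w \<in> V" and wz: "w \<noteq> z" using two_elems[OF assms] zV by metis
  define M where "M = Max (d z ` V)"
  have finI: "finite (d z ` V)" using finV by auto
  have "M \<in> d z ` V" unfolding M_def using Max_in finI Vne by auto
  then obtain l where lV: "l \<in> V" and dl: "d z l = M" by auto
  have Mge: "\<And>v. v \<in> V \<Longrightarrow> d z v \<le> M" unfolding M_def using finI by auto
  have "d z w \<noteq> 0" using d0 zV wV wz by auto
  then have lz: "l \<noteq> z" using Mge[OF wV] dl by auto
  obtain p where lp: "E l p" and dp: "d p z + 1 = d l z" using d_closer[OF lV zV lz] by auto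
  have pV: "p \<in> V" using EV lp by auto
  have zp: "z \<in> Br l p" using dp d_sym[OF zV pV] d_sym[OF zV lV] zV unfolding Br_def by auto
  have "\<forall>n. E l n \<longrightarrow> n = p"
  proof (intro allI impI)
    fix n assume ln: "E l n"
    have nV: "n \<in> V" using EV ln by auto
    have "d z n \<le> d z l" using Mge[OF nV] dl by auto
    moreover have "d z n = d z l + 1 \<or> d z l = d z n + 1" using D1[OF Esym[OF ln] zV] .
    ultimately have "z \<in> Br l n" using zV unfolding Br_def by auto
    then show "n = p" using Br_disj[OF ln lp] zp by auto
  qed
  then show ?thesis using lp by blast
qed

lemma small_card: assumes AR: "adj_resolving_set V E A" and Aa: "A \<subseteq> {a}" shows "card V \<le> 3"
proof -
  have inj: "inj_on (\<lambda>v. adist E v a) V"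
  proof (rule inj_onI, rule ccontr)
    fix v v' assume v: "v \<in> V" and v': "v' \<in> V" and eq: "adist E v a = adist E v' a" and ne: "v \<noteq> v'"
    obtain z where "z \<in> A" "adist E v z \<noteq> adist E v' z" using AR v v' ne unfolding adj_resolving_set_def by blast
    then show False using Aa eq by auto
  qed
  have "(\<lambda>v. adist E v a) ` V \<subseteq> {0,1,2}" unfolding adist_def by auto
  then have "card ((\<lambda>v. adist E v a) ` V) \<le> card {0::nat,1,2}" by (intro card_mono) auto
  then show ?thesis using card_image[OF inj] by simp
qed

lemma path_res: assumes nd: "\<not> (\<exists>v n1 n2 n3. E v n1 \<and> E v n2 \<and> E v n3 \<and> n1 \<noteq> n2 \<and> n1 \<noteq> n3 \<and> n2 \<noteq> n3)"
  and l: "E l c0" "\<forall>n. E l n \<longrightarrow> n = c0" shows "resolving_set V E {l}"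
proof (rule ccontr)
  assume nr: "\<not> ?thesis"
  have lV: "l \<in> V" using EV l by auto
  obtain x y where xy: "x \<in> V" "y \<in> V" "x \<noteq> y" "\<forall>s\<in>{l}. d x s = d y s"
    using nr lV unfolding resolving_set_def by auto
  obtain m u w where cr: "crit {l} m u w" using crit_hard[OF _ _ xy] lV by blast
  have mu: "E m u" and mw: "E m w" and uw: "u \<noteq> w" and lu: "l \<notin> Br m u" and lw: "l \<notin> Br m w"
    using cr unfolding crit_def by auto
  have lm: "l \<noteq> m" using mu mw uw l by auto
  have mV: "m \<in> V" using EV mu by auto
  obtain y' where my: "E m y'" "l \<in> Br m y'" using D2[OF lV mV lm] by auto
  have "y' \<noteq> u" "y' \<noteq> w" using my lu lw by auto
  then show False using nd mu mw my uw by blast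
qed

lemma V_res: "resolving_set V E V"
  unfolding resolving_set_def
proof (intro conjI ballI impI)
  fix x y assume x: "x \<in> V" and y: "y \<in> V" and xy: "x \<noteq> y"
  have "d y x \<noteq> 0" using d0 x y xy by auto
  then show "\<exists>z\<in>V. d x z \<noteq> d y z" using x by (intro bexI[of _ x]) auto
qed simp

lemma V_adjres: "adj_resolving_set V E V"
  unfolding adj_resolving_set_def
proof (intro conjI ballI impI)
  fix x y assume x: "x \<in> V" and y: "y \<in> V" and xy: "x \<noteq> y"
  have "d y x \<noteq> 0" using d0 x y xy by auto
  then have "adist E y x \<noteq> 0" unfolding adist_def by auto
  then show "\<exists>z\<in>V. adist E x z \<noteq> adist E y z" using x by (intro bexI[of _ x]) (auto simp: adist_def)
qed simp

lemma fin_cards: "finite {card S | S. resolving_set V E S}" "finite {card A | A. adj_resolving_set V E A}"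
proof -
  have "{card S | S. resolving_set V E S} \<subseteq> {0..card V}"
    unfolding resolving_set_def using card_mono[OF finV] by auto
  then show "finite {card S | S. resolving_set V E S}" using finite_subset by blast
  have "{card A | A. adj_resolving_set V E A} \<subseteq> {0..card V}"
    unfolding adj_resolving_set_def using card_mono[OF finV] by auto
  then show "finite {card A | A. adj_resolving_set V E A}" using finite_subset by blast
qed

lemma md_le: "resolving_set V E S \<Longrightarrow> metric_dim V E \<le> card S"
  unfolding metric_dim_def using fin_cards(1) by (intro Min_le) auto

lemma ad_le: "adj_resolving_set V E A \<Longrightarrow> adj_dim V E \<le> card A"
  unfolding adj_dim_def using fin_cards(2) by (intro Min_le) auto

lemma md_ex: "\<exists>S. resolving_set V E S \<and> card S = metric_dim V E"
proof -
  have "metric_dim V E \<in> {card S | S. resolving_set V E S}"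
    unfolding metric_dim_def using fin_cards(1) V_res by (intro Min_in) auto
  then show ?thesis by auto
qed

lemma ad_ex: "\<exists>A. adj_resolving_set V E A \<and> card A = adj_dim V E"
proof -
  have "adj_dim V E \<in> {card A | A. adj_resolving_set V E A}"
    unfolding adj_dim_def using fin_cards(2) V_adjres by (intro Min_in) auto
  then show ?thesis by auto
qed

lemma md_le_ad: "metric_dim V E \<le> adj_dim V E"
  using ad_ex md_le adj_res_res by metis

lemma md_ge1: assumes "card V \<ge> 2" shows "metric_dim V E \<ge> 1"
proof -
  obtain S where S: "resolving_set V E S" "card S = metric_dim V E" using md_ex by blast
  obtain x y where "x \<in> V" "y \<in> V" "x \<noteq> y"
    using two_elems[OF assms] by blast
  then have "S \<noteq> {}" using S unfolding resolving_set_def by auto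
  moreover have "finite S" using S finV finite_subset unfolding resolving_set_def by auto
  ultimately have "card S > 0" by (simp add: card_gt_0_iff)
  then show ?thesis using S(2) by simp
qed

end

definition sig :: "(nat \<Rightarrow> nat \<Rightarrow> bool) \<Rightarrow> nat \<Rightarrow> nat \<Rightarrow> nat" where
  "sig F i t = (if i = t then 0 else if F i t then 1 else 2)"

context tr begin

lemma adim_iso: assumes iso: "graph_iso V E W F" and finB: "finite B" and BW: "B \<subseteq> W"
  and wit: "\<forall>i\<in>W. \<forall>j\<in>W. i \<noteq> j \<longrightarrow> (\<exists>t\<in>B. sig F i t \<noteq> sig F j t)"
  shows "adj_dim V E \<le> card B"
proof -
  obtain f where f: "bij_betw f V W" and fe: "\<forall>x\<in>V. \<forall>y\<in>V. E x y \<longleftrightarrow> F (f x) (f y)"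
    using iso unfolding graph_iso_def by blast
  let ?g = "inv_into V f"
  have gV: "\<And>t. t \<in> W \<Longrightarrow> ?g t \<in> V" using bij_betw_inv_into[OF f] bij_betwE by blast
  have fg: "\<And>t. t \<in> W \<Longrightarrow> f (?g t) = t" using bij_betw_inv_into_right[OF f] by blast
  have fV: "\<And>v. v \<in> V \<Longrightarrow> f v \<in> W" using f bij_betwE by blast
  have finj: "\<And>v v'. v \<in> V \<Longrightarrow> v' \<in> V \<Longrightarrow> f v = f v' \<Longrightarrow> v = v'" using f unfolding bij_betw_def inj_on_def by blast
  have ad: "\<And>v z. v \<in> V \<Longrightarrow> z \<in> V \<Longrightarrow> adist E v z = sig F (f v) (f z)"
  proof -
    fix v z assume v: "v \<in> V" and z: "z \<in> V"
    have "v = z \<longleftrightarrow> f v = f z" using finj v z by blast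
    moreover have "E v z \<longleftrightarrow> F (f v) (f z)" using fe v z by blast
    ultimately show "adist E v z = sig F (f v) (f z)" unfolding adist_eq[OF v z] sig_def by simp
  qed
  let ?A = "?g ` B"
  have "adj_resolving_set V E ?A"
    unfolding adj_resolving_set_def
  proof (intro conjI ballI impI)
    show "?A \<subseteq> V" using gV BW by auto
  next
    fix v v' assume v: "v \<in> V" and v': "v' \<in> V" and ne: "v \<noteq> v'"
    have "f v \<noteq> f v'" using finj v v' ne by blast
    then obtain t where t: "t \<in> B" "sig F (f v) t \<noteq> sig F (f v') t" using wit fV v v' by blast
    have tW: "t \<in> W" using t BW by auto
    have "adist E v (?g t) \<noteq> adist E v' (?g t)"
      using ad[OF v gV[OF tW]] ad[OF v' gV[OF tW]] fg[OF tW] t by simp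
    then show "\<exists>z\<in>?A. adist E v z \<noteq> adist E v' z" using t by blast
  qed
  then have "adj_dim V E \<le> card ?A" by (rule ad_le)
  also have "\<dots> \<le> card B" using card_image_le[OF finB] .
  finally show ?thesis .
qed

lemma md_spider: assumes iso: "graph_iso V E (spider_V x k) (spider_E x k)" and kx: "k < x"
  shows "metric_dim V E \<ge> x - 1"
proof -
  obtain f where f: "bij_betw f V (spider_V x k)" and fe: "\<forall>u\<in>V. \<forall>v\<in>V. E u v \<longleftrightarrow> spider_E x k (f u) (f v)"
    using iso unfolding graph_iso_def by blast
  define W where "W = spider_V x k"
  let ?g = "inv_into V f"
  have gV: "\<And>t. t \<in> W \<Longrightarrow> ?g t \<in> V" using bij_betw_inv_into[OF f] bij_betwE unfolding W_def by blast
  have fg: "\<And>t. t \<in> W \<Longrightarrow> f (?g t) = t" using bij_betw_inv_into_right[OF f] unfolding W_def by blast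
  have ginj: "\<And>s t. s \<in> W \<Longrightarrow> t \<in> W \<Longrightarrow> ?g s = ?g t \<Longrightarrow> s = t" using fg by metis
  define leg where "leg t = (if t \<le> k then x + t else t)" for t
  have legW: "\<And>t. t \<in> {1..x} \<Longrightarrow> leg t \<in> W" unfolding leg_def W_def spider_V_def by auto
  have leginj: "\<And>s t. s \<in> {1..x} \<Longrightarrow> t \<in> {1..x} \<Longrightarrow> leg s = leg t \<Longrightarrow> s = t"
    unfolding leg_def using kx by (auto split: if_splits)
  define c where "c = ?g 0"
  define L where "L t = ?g (leg t)" for t
  have zW: "0 \<in> W" unfolding W_def spider_V_def by auto
  have cL: "\<And>t. t \<in> {1..x} \<Longrightarrow> E c (L t)"
  proof -
    fix t assume t: "t \<in> {1..x}"
    have "spider_E x k 0 (leg t)" unfolding spider_E_def spider_E0_def leg_def using t kx by auto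
    then show "E c (L t)" using fe gV[OF zW] gV[OF legW[OF t]] fg[OF zW] fg[OF legW[OF t]]
      unfolding c_def L_def by auto
  qed
  have Linj: "\<And>s t. s \<in> {1..x} \<Longrightarrow> t \<in> {1..x} \<Longrightarrow> L s = L t \<Longrightarrow> s = t"
    using ginj legW leginj unfolding L_def by metis
  obtain S where S: "resolving_set V E S" "card S = metric_dim V E" using md_ex by blast
  have finS: "finite S" using S(1) finV finite_subset unfolding resolving_set_def by auto
  define I where "I = {t \<in> {1..x}. \<exists>s\<in>S. s \<in> Br c (L t)}"
  have D1: "card ({1..x} - I) \<le> Suc 0"
  proof (subst card_le_Suc0_iff_eq, simp, intro ballI, rule ccontr)
    fix a b assume a: "a \<in> {1..x} - I" and b: "b \<in> {1..x} - I" and ab: "a \<noteq> b"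
    have "L a \<noteq> L b" using Linj a b ab by auto
    moreover have "\<forall>s\<in>S. s \<notin> Br c (L a) \<and> s \<notin> Br c (L b)" using a b unfolding I_def by auto
    ultimately show False using free2[OF S(1) cL cL] a b by auto
  qed
  have IS: "I \<subseteq> {1..x}" unfolding I_def by auto
  have "card ({1..x} - I) = x - card I" using card_Diff_subset[OF finite_subset[OF IS] IS] by simp
  then have cI: "card I \<ge> x - 1" using D1 by auto
  define sel where "sel t = (SOME s. s \<in> S \<and> s \<in> Br c (L t))" for t
  have sel: "\<And>t. t \<in> I \<Longrightarrow> sel t \<in> S \<and> sel t \<in> Br c (L t)"
    unfolding sel_def I_def by (rule someI_ex) auto
  have "inj_on sel I"
  proof (rule inj_onI)
    fix a b assume a: "a \<in> I" and b: "b \<in> I" and eq: "sel a = sel b"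
    have "sel a \<in> Br c (L a)" "sel a \<in> Br c (L b)" using sel[OF a] sel[OF b] eq by auto
    then have "L a = L b" using Br_disj cL a b unfolding I_def by blast
    then show "a = b" using Linj a b unfolding I_def by blast
  qed
  moreover have "sel ` I \<subseteq> S" using sel by auto
  ultimately have "card I \<le> card S" using card_inj_on_le finS by blast
  then show ?thesis using cI S(2) by auto
qed

lemma iso_P2: assumes "card V = 2" shows "graph_iso V E (path_V 2) (path_E 2)"
proof -
  obtain a b where V: "V = {a,b}" and ab: "a \<noteq> b" using assms unfolding card_2_iff by blast
  have aV: "a \<in> V" and bV: "b \<in> V" using V by auto
  obtain p where ap: "E a p" using d_closer[OF aV bV ab] by blast
  have "p \<in> V" "p \<noteq> a" using EV[OF ap] Ene[OF ap] by auto
  then have eab: "E a b" using ap V by auto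
  define h where "h i = (if i = 0 then a else b)" for i :: nat
  have e2: "{0..<2::nat} = {0,1}" by auto
  have bij: "bij_betw h {0..<2} V" unfolding bij_betw_def inj_on_def e2 h_def V using ab by auto
  have "\<forall>i\<in>{0..<2}. \<forall>j\<in>{0..<2}. path_E 2 i j \<longleftrightarrow> E (h i) (h j)"
    unfolding h_def path_E_def using eab Esym[OF eab] Eirr by auto
  then show ?thesis using iso_from_inv[OF bij] unfolding path_V_def by blast
qed

lemma iso_P3: assumes "card V = 3" shows "graph_iso V E (path_V 3) (path_E 3)"
proof -
  have "card V \<ge> 2" using assms by simp
  then obtain l c0 where l: "E l c0" "\<forall>n. E l n \<longrightarrow> n = c0" using leaf_ex by blast
  have lV: "l \<in> V" and c0V: "c0 \<in> V" using EV[OF l(1)] by auto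
  have lc: "l \<noteq> c0" using Ene[OF l(1)] .
  obtain v where vV: "v \<in> V" and vl: "v \<noteq> l" and vc: "v \<noteq> c0"
  proof -
    have "\<not> V \<subseteq> {l, c0}"
    proof
      assume "V \<subseteq> {l,c0}"
      then have "card V \<le> card {l, c0}" by (rule card_mono[rotated]) simp
      moreover have "card {l, c0} \<le> 2" by (simp add: card_insert_if)
      ultimately show False using assms by simp
    qed
    then show ?thesis using that by blast
  qed
  have V: "V = {l, c0, v}"
  proof (rule card_subset_eq[symmetric])
    show "finite V" using finV .
    show "{l, c0, v} \<subseteq> V" using lV c0V vV by auto
    show "card {l, c0, v} = card V" using assms lc vl vc by auto
  qed
  obtain p where vp: "E v p" using d_closer[OF vV lV vl] by auto
  have "p \<in> V" "p \<noteq> v" using EV[OF vp] Ene[OF vp] by auto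
  moreover have "p \<noteq> l" using l(2) Esym[OF vp] vc by auto
  ultimately have "p = c0" using V by auto
  then have evc: "E v c0" using vp by simp
  have nlv: "\<not> E l v" using l(2) vc by auto
  have nvl: "\<not> E v l" using nlv Esym by blast
  define h where "h i = (if i = 0 then l else if i = 1 then c0 else v)" for i :: nat
  have bij: "bij_betw h {0..<3} V" unfolding bij_betw_def
  proof
    show "inj_on h {0..<3}" unfolding inj_on_def h_def using lc vl vc by auto
    show "h ` {0..<3} = V"
    proof
      show "h ` {0..<3} \<subseteq> V" unfolding h_def V by auto
      have "h 0 = l" "h 1 = c0" "h 2 = v" unfolding h_def by auto
      moreover have "(0::nat) \<in> {0..<3}" "(1::nat) \<in> {0..<3}" "(2::nat) \<in> {0..<3}" by auto
      ultimately show "V \<subseteq> h ` {0..<3}" unfolding V by (metis empty_subsetI image_eqI insert_subset)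
    qed
  qed
  have "\<forall>i\<in>{0..<3}. \<forall>j\<in>{0..<3}. path_E 3 i j \<longleftrightarrow> E (h i) (h j)"
  proof (intro ballI)
    fix i j :: nat assume i: "i \<in> {0..<3}" and j: "j \<in> {0..<3}"
    have i3: "i = 0 \<or> i = 1 \<or> i = 2" and j3: "j = 0 \<or> j = 1 \<or> j = 2" using i j by auto
    show "path_E 3 i j \<longleftrightarrow> E (h i) (h j)"
      using i3 j3 unfolding h_def path_E_def using l(1) Esym[OF l(1)] evc Esym[OF evc] nlv nvl Eirr by auto
  qed
  then show ?thesis using iso_from_inv[OF bij] unfolding path_V_def by blast
qed

end

definition spB :: "nat \<Rightarrow> nat \<Rightarrow> nat set" where
  "spB x k = {q. (k < q \<and> q < x) \<or> (x < q \<and> q \<le> x + k)}"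

lemma spB_card: assumes "k < x" shows "card (spB x k) = x - 1"
proof -
  have e: "spB x k = {k<..<x} \<union> {x<..x+k}" unfolding spB_def by auto
  have "card ({k<..<x} \<union> {x<..x+k}) = card {k<..<x} + card {x<..x+k}"
    by (rule card_Un_disjoint) auto
  then show ?thesis unfolding e using assms by simp
qed

lemma spB_sub: "spB x k \<subseteq> spider_V x k" unfolding spB_def spider_V_def by auto
lemma spB_fin: "finite (spB x k)" using finite_subset[OF spB_sub] unfolding spider_V_def by auto

lemma spider_wit: assumes x3: "x \<ge> 3" and kx: "k < x" and i: "i \<in> spider_V x k" and j: "j \<in> spider_V x k"
  and ij: "i \<noteq> j"
  shows "\<exists>t\<in>spB x k. sig (spider_E x k) i t \<noteq> sig (spider_E x k) j t"
proof -
  let ?s = "sig (spider_E x k)"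
  have s0: "\<And>q. q \<in> spB x k \<Longrightarrow> ?s 0 q = 1"
    unfolding spB_def sig_def spider_E_def spider_E0_def by auto
  have sx: "\<And>q. q \<in> spB x k \<Longrightarrow> ?s x q = 2"
    unfolding spB_def sig_def spider_E_def spider_E0_def using kx by auto
  have sp: "\<And>p q. 1 \<le> p \<Longrightarrow> p \<le> k \<Longrightarrow> q \<in> spB x k \<Longrightarrow> ?s p q = (if q = x + p then 1 else 2)"
    unfolding spB_def sig_def spider_E_def spider_E0_def using kx by auto
  have sne: "\<And>a b. a \<noteq> b \<Longrightarrow> ?s a b \<noteq> 0" unfolding sig_def by auto
  have sq: "\<And>q. ?s q q = 0" unfolding sig_def by auto
  have xpB: "\<And>p. 1 \<le> p \<Longrightarrow> p \<le> k \<Longrightarrow> x + p \<in> spB x k" unfolding spB_def by auto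
  have C: "\<And>a. a \<in> spider_V x k \<Longrightarrow> a \<notin> spB x k \<Longrightarrow> a = 0 \<or> a = x \<or> (1 \<le> a \<and> a \<le> k)"
    unfolding spB_def spider_V_def by auto
  have other: "\<And>p. 1 \<le> p \<Longrightarrow> p \<le> k \<Longrightarrow> \<exists>t\<in>spB x k. t \<noteq> x + p"
  proof -
    fix p assume p: "1 \<le> p" "p \<le> k"
    show "\<exists>t\<in>spB x k. t \<noteq> x + p"
    proof (cases "p = 1")
      case True
      show ?thesis
      proof (cases "k \<ge> 2")
        case True then show ?thesis using \<open>p = 1\<close> by (intro bexI[of _ "x + 2"]) (auto simp: spB_def)
      next
        case False then show ?thesis using x3 by (intro bexI[of _ "k + 1"]) (auto simp: spB_def)
      qed
    next
      case False then show ?thesis using p by (intro bexI[of _ "x + 1"]) (auto simp: spB_def)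
    qed
  qed
  have someB: "\<exists>t. t \<in> spB x k"
  proof (cases "k \<ge> 1")
    case True then show ?thesis using xpB[of 1] by auto
  next
    case False then show ?thesis using x3 by (intro exI[of _ 1]) (auto simp: spB_def)
  qed
  have main: "\<And>a b. a \<in> spider_V x k \<Longrightarrow> b \<in> spider_V x k \<Longrightarrow> a \<noteq> b \<Longrightarrow> a \<notin> spB x k \<Longrightarrow> b \<notin> spB x k
     \<Longrightarrow> \<exists>t\<in>spB x k. ?s a t \<noteq> ?s b t"
  proof -
    fix a b assume a: "a \<in> spider_V x k" and b: "b \<in> spider_V x k" and ab: "a \<noteq> b"
      and aB: "a \<notin> spB x k" and bB: "b \<notin> spB x k"
    have ca: "a = 0 \<or> a = x \<or> (1 \<le> a \<and> a \<le> k)" using C a aB by auto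
    have cb: "b = 0 \<or> b = x \<or> (1 \<le> b \<and> b \<le> k)" using C b bB by auto
    have c1: "a = 0 \<Longrightarrow> b = x \<Longrightarrow> \<exists>t\<in>spB x k. ?s a t \<noteq> ?s b t" using someB s0 sx by force
    have c2: "a = x \<Longrightarrow> b = 0 \<Longrightarrow> \<exists>t\<in>spB x k. ?s a t \<noteq> ?s b t" using someB s0 sx by force
    have c3: "a = 0 \<Longrightarrow> 1 \<le> b \<Longrightarrow> b \<le> k \<Longrightarrow> \<exists>t\<in>spB x k. ?s a t \<noteq> ?s b t"
    proof -
      assume h: "a = 0" "1 \<le> b" "b \<le> k"
      then obtain t where "t \<in> spB x k" "t \<noteq> x + b" using other by blast
      then show ?thesis using s0 sp h by (intro bexI[of _ t]) auto
    qed
    have c4: "b = 0 \<Longrightarrow> 1 \<le> a \<Longrightarrow> a \<le> k \<Longrightarrow> \<exists>t\<in>spB x k. ?s a t \<noteq> ?s b t"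
    proof -
      assume h: "b = 0" "1 \<le> a" "a \<le> k"
      then obtain t where "t \<in> spB x k" "t \<noteq> x + a" using other by blast
      then show ?thesis using s0 sp h by (intro bexI[of _ t]) auto
    qed
    have c5: "a = x \<Longrightarrow> 1 \<le> b \<Longrightarrow> b \<le> k \<Longrightarrow> \<exists>t\<in>spB x k. ?s a t \<noteq> ?s b t"
    proof -
      assume h: "a = x" "1 \<le> b" "b \<le> k"
      have t: "x + b \<in> spB x k" using xpB h(2,3) .
      have "?s a (x + b) = 2" using sx[OF t] h(1) by simp
      moreover have "?s b (x + b) = 1" using sp[OF h(2) h(3) t] by simp
      ultimately show ?thesis using t by (intro bexI[of _ "x + b"]) simp_all
    qed
    have c6: "b = x \<Longrightarrow> 1 \<le> a \<Longrightarrow> a \<le> k \<Longrightarrow> \<exists>t\<in>spB x k. ?s a t \<noteq> ?s b t"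
    proof -
      assume h: "b = x" "1 \<le> a" "a \<le> k"
      have t: "x + a \<in> spB x k" using xpB h(2,3) .
      have "?s b (x + a) = 2" using sx[OF t] h(1) by simp
      moreover have "?s a (x + a) = 1" using sp[OF h(2) h(3) t] by simp
      ultimately show ?thesis using t by (intro bexI[of _ "x + a"]) simp_all
    qed
    have c7: "1 \<le> a \<Longrightarrow> a \<le> k \<Longrightarrow> 1 \<le> b \<Longrightarrow> b \<le> k \<Longrightarrow> \<exists>t\<in>spB x k. ?s a t \<noteq> ?s b t"
    proof -
      assume h: "1 \<le> a" "a \<le> k" "1 \<le> b" "b \<le> k"
      have t: "x + a \<in> spB x k" using xpB h(1,2) .
      have "?s a (x + a) = 1" using sp[OF h(1) h(2) t] by simp
      moreover have "?s b (x + a) = 2" using sp[OF h(3) h(4) t] ab by simp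
      ultimately show ?thesis using t by (intro bexI[of _ "x + a"]) simp_all
    qed
    show "\<exists>t\<in>spB x k. ?s a t \<noteq> ?s b t"
      using ca cb ab kx c1 c2 c3 c4 c5 c6 c7 by fastforce
  qed
  show ?thesis
  proof (cases "i \<in> spB x k")
    case True
    have "?s i i \<noteq> ?s j i" using sq[of i] sne[of j i] ij by simp
    then show ?thesis using True by blast
  next
    case False
    show ?thesis
    proof (cases "j \<in> spB x k")
      case True
      have "?s i j \<noteq> ?s j j" using sq[of j] sne[of i j] ij by simp
      then show ?thesis using True by blast
    next
      case False then show ?thesis using main[OF i j ij] \<open>i \<notin> spB x k\<close> by blast
    qed
  qed
qed

lemma P2_wit: "\<forall>i\<in>path_V 2. \<forall>j\<in>path_V 2. i \<noteq> j \<longrightarrow> (\<exists>t\<in>{0}. sig (path_E 2) i t \<noteq> sig (path_E 2) j t)"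
  unfolding path_V_def path_E_def sig_def by auto

lemma P3_wit: "\<forall>i\<in>path_V 3. \<forall>j\<in>path_V 3. i \<noteq> j \<longrightarrow> (\<exists>t\<in>{0}. sig (path_E 3) i t \<noteq> sig (path_E 3) j t)"
proof (intro ballI impI)
  fix i j :: nat assume "i \<in> path_V 3" "j \<in> path_V 3" "i \<noteq> j"
  then have "i = 0 \<or> i = 1 \<or> i = 2" "j = 0 \<or> j = 1 \<or> j = 2" unfolding path_V_def by auto
  then show "\<exists>t\<in>{0}. sig (path_E 3) i t \<noteq> sig (path_E 3) j t"
    using \<open>i \<noteq> j\<close> unfolding path_E_def sig_def by auto
qed


theorem corollary5p11:
  fixes V :: "'a set" and E :: "'a \<Rightarrow> 'a \<Rightarrow> bool"
  assumes "tree V E" and "card V \<ge> 2"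
  shows "metric_dim V E = adj_dim V E \<longleftrightarrow>
    (graph_iso V E (path_V 2) (path_E 2) \<or> graph_iso V E (path_V 3) (path_E 3) \<or>
     (\<exists>x k::nat. x \<ge> 3 \<and> k \<le> x - 1 \<and> graph_iso V E (spider_V x k) (spider_E x k)))"
proof -
  interpret tr V E using assms(1) by unfold_locales
  have c2: "card V \<ge> 2" using assms(2) .
  show ?thesis
  proof
    assume eq: "metric_dim V E = adj_dim V E"
    show "graph_iso V E (path_V 2) (path_E 2) \<or> graph_iso V E (path_V 3) (path_E 3) \<or>
     (\<exists>x k::nat. x \<ge> 3 \<and> k \<le> x - 1 \<and> graph_iso V E (spider_V x k) (spider_E x k))"
    proof (cases "\<exists>v n1 n2 n3. E v n1 \<and> E v n2 \<and> E v n3 \<and> n1 \<noteq> n2 \<and> n1 \<noteq> n3 \<and> n2 \<noteq> n3")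
      case True
      then obtain v0 n1 n2 n3 where n: "E v0 n1" "E v0 n2" "E v0 n3" "n1 \<noteq> n2" "n1 \<noteq> n3" "n2 \<noteq> n3"
        by blast
      obtain A where AR: "adj_resolving_set V E A" and cA: "card A = adj_dim V E" using ad_ex by blast
      have R: "resolving_set V E A" using adj_res_res[OF AR] .
      have AV: "A \<subseteq> V" using AR unfolding adj_resolving_set_def by auto
      have finA: "finite A" using finite_subset[OF AV finV] .
      have c4: "card V \<ge> 4"
      proof -
        have "v0 \<noteq> n1" "v0 \<noteq> n2" "v0 \<noteq> n3" using Ene n by auto
        then have "card {v0, n1, n2, n3} = 4" using n by auto
        moreover have "{v0, n1, n2, n3} \<subseteq> V" using EV n by auto
        ultimately show ?thesis using card_mono[OF finV] by metis
      qed
      have notsmall: "\<And>a. \<not> A \<subseteq> {a}" using small_card[OF AR] c4 by fastforce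
      have Ane: "A \<noteq> {}" using notsmall by auto
      have T: "\<forall>a\<in>A. \<exists>m u w. tri A a m u w"
      proof
        fix a assume aA: "a \<in> A"
        have nr: "\<not> resolving_set V E (A - {a})"
        proof
          assume "resolving_set V E (A - {a})"
          then have "metric_dim V E \<le> card (A - {a})" by (rule md_le)
          also have "\<dots> < card A" using card_Diff1_less[OF finA aA] .
          finally show False using eq cA by simp
        qed
        then obtain x y where xy: "x \<in> V" "y \<in> V" "x \<noteq> y" "\<forall>s\<in>A - {a}. d x s = d y s"
          using AV unfolding resolving_set_def by auto
        have "A - {a} \<noteq> {}" using notsmall[of a] by auto
        then obtain m u w where "crit (A - {a}) m u w" using crit_hard[OF _ _ xy] AV by blast
        then have "tri A a m u w \<or> tri A a m w u" using crit_tri[OF R aA] by blast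
        then show "\<exists>m u w. tri A a m u w" by blast
      qed
      obtain c z0 where co: "E c z0" "\<forall>n. E z0 n \<longrightarrow> n = c" "\<forall>v\<in>V. v = c \<or> E c v \<or> (\<exists>y. E c y \<and> E y v \<and> v \<noteq> c)"
        "\<forall>y t1 t2. E c y \<longrightarrow> E y t1 \<longrightarrow> E y t2 \<longrightarrow> t1 \<noteq> c \<longrightarrow> t2 \<noteq> c \<longrightarrow> t1 = t2"
        "\<forall>y t n. E c y \<longrightarrow> E y t \<longrightarrow> t \<noteq> c \<longrightarrow> E t n \<longrightarrow> n = y" "v0 = c"
        using core[OF AR T Ane n] by blast
      have "\<exists>x k::nat. x \<ge> 3 \<and> k \<le> x - 1 \<and> graph_iso V E (spider_V x k) (spider_E x k)"
        using spider_recog[OF co(1-5)] n co(6) by blast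
      then show ?thesis by blast
    next
      case False
      have c3: "card V \<le> 3"
      proof (rule ccontr)
        assume "\<not> card V \<le> 3"
        then have c4: "card V \<ge> 4" by auto
        obtain l c0 where l: "E l c0" "\<forall>n. E l n \<longrightarrow> n = c0" using leaf_ex[OF c2] by blast
        have "metric_dim V E \<le> card {l}" using md_le[OF path_res[OF False l]] .
        then have md1: "metric_dim V E \<le> 1" by simp
        obtain A where AR: "adj_resolving_set V E A" and cA: "card A = adj_dim V E" using ad_ex by blast
        have AV: "A \<subseteq> V" using AR unfolding adj_resolving_set_def by auto
        have finA: "finite A" using finite_subset[OF AV finV] .
        have "card A \<ge> 2"
        proof (rule ccontr)
          assume "\<not> card A \<ge> 2"
          then have "card A \<le> Suc 0" by auto
          then have "\<forall>a1\<in>A. \<forall>a2\<in>A. a1 = a2" using card_le_Suc0_iff_eq[OF finA] by blast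
          then obtain a where "A \<subseteq> {a}" by blast
          then show False using small_card[OF AR] c4 by auto
        qed
        then show False using md1 eq cA by auto
      qed
      then have "card V = 2 \<or> card V = 3" using c2 by auto
      then show ?thesis using iso_P2 iso_P3 by blast
    qed
  next
    assume H: "graph_iso V E (path_V 2) (path_E 2) \<or> graph_iso V E (path_V 3) (path_E 3) \<or>
     (\<exists>x k::nat. x \<ge> 3 \<and> k \<le> x - 1 \<and> graph_iso V E (spider_V x k) (spider_E x k))"
    have ge: "metric_dim V E \<le> adj_dim V E" using md_le_ad .
    have m1: "metric_dim V E \<ge> 1" using md_ge1[OF c2] .
    from H show "metric_dim V E = adj_dim V E"
    proof (elim disjE exE conjE)
      assume iso: "graph_iso V E (path_V 2) (path_E 2)"
      have "adj_dim V E \<le> card {0::nat}"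
        using adim_iso[OF iso _ _ P2_wit] unfolding path_V_def by auto
      then show ?thesis using ge m1 by auto
    next
      assume iso: "graph_iso V E (path_V 3) (path_E 3)"
      have "adj_dim V E \<le> card {0::nat}"
        using adim_iso[OF iso _ _ P3_wit] unfolding path_V_def by auto
      then show ?thesis using ge m1 by auto
    next
      fix x k :: nat assume x3: "x \<ge> 3" and kx: "k \<le> x - 1" and iso: "graph_iso V E (spider_V x k) (spider_E x k)"
      have kx': "k < x" using x3 kx by auto
      have "adj_dim V E \<le> card (spB x k)"
        using adim_iso[OF iso spB_fin spB_sub] spider_wit[OF x3 kx'] by blast
      then have "adj_dim V E \<le> x - 1" using spB_card[OF kx'] by simp
      moreover have "metric_dim V E \<ge> x - 1" using md_spider[OF iso kx'] .
      ultimately show ?thesis using ge by auto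
    qed
  qed
qed


end
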